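(* Let $A\in\{0,1\}^{n\times n}$ be symmetric, let $t\in(0,1)$, $c_{A}=\sqrt{(1-t)/t}$, $c_{A^c}=\sqrt{t/(1-t)}$, $\lambda=\frac{1}{48\sqrt n}$, and let $Y^*$ be a cluster matrix as described in the context. Then $Y^*$ is the unique optimal solution of $$\max_{Y\in\mathbb{R}^{n\times n}}\ c_{A}\sum_{(i,j):a_{ij}=1}y_{ij}-c_{A^c}\sum_{(i,j):a_{ij}=0}y_{ij}-48\sqrt{n}\,\|Y\|_*\quad\text{s.t. } 0\le y_{ij}\le 1\ \ \forall i,j,$$ if there exist a matrix $W\in\mathbb{R}^{n\times n}$ and a number $0<\epsilon<1$ such that (a) $\|W\|\le 1$; (b) $\|P_T(W)\|_\infty\le \frac{\epsilon}{2}\lambda\min\{c_{A^c},c_{A}\}$; (c) $-(1+\epsilon)\lambda c_{A^c}-(U_0U_0^\top+W)_{ij}=0$ for all $(i,j)\in R\cap\mathcal{A}^c$; $-(1+\epsilon)\lambda c_{A}+w_{ij}=0$ for all $(i,j)\in R^c\cap\mathcal{A}$; $(1-\epsilon)\lambda c_{A}-(U_0U_0^\top+W)_{ij}\ge 0$ for all $(i,j)\in R\cap\mathcal{A}$; and $(1-\epsilon)\lambda c_{A^c}+w_{ij}\ge0$ for all $(i,j)\in R^c\cap\mathcal{A}^c$.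
   Context: Cluster matrix: the nodes $\{1,\dots,n\}$ contain a subset $V_1$ partitioned into disjoint clusters (remaining nodes are outliers), and $Y^*\in\{0,1\}^{n\times n}$ has $y^*_{ij}=1$ iff $i,j\in V_1$ lie in the same cluster (including $i=j\in V_1$), $0$ otherwise. $Y^*$ is symmetric positive semidefinite; write its compact eigen/singular value decomposition $Y^*=U_0\Sigma_0U_0^\top$ with $U_0$ having orthonormal columns. $P_T(M):=U_0U_0^\top M+MU_0U_0^\top-U_0U_0^\top MU_0U_0^\top$. $\mathcal{A}=\mathrm{support}(A)=\{(i,j):a_{ij}=1\}$, $R=\mathrm{support}(Y^* )$, and complements are taken in $\{1,\dots,n\}^2$. $\|W\|$ is the spectral norm, $\|M\|_\infty=\max_{ij}|m_{ij}|$, $\|\cdot\|_*$ the nuclear norm. *)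

theory Defs
  imports "Jordan_Normal_Form.Matrix" "HOL-Library.Disjoint_Sets"
begin

(* Matrices are Jordan_Normal_Form matrices ('real mat'); indices are 0-based,
   i.e. node set {0..<n}. *)

definition vnorm2 :: "real vec \<Rightarrow> real" where
  "vnorm2 v = sqrt (v \<bullet> v)"

definition spec_norm :: "real mat \<Rightarrow> real" where
  "spec_norm M = Sup {vnorm2 (M *\<^sub>v v) | v. v \<in> carrier_vec (dim_col M) \<and> vnorm2 v \<le> 1}"

definition psd_mat :: "real mat \<Rightarrow> bool" where
  "psd_mat S \<longleftrightarrow> S \<in> carrier_mat (dim_row S) (dim_row S) \<and> S\<^sup>T = S \<and>
     (\<forall>v \<in> carrier_vec (dim_row S). v \<bullet> (S *\<^sub>v v) \<ge> 0)"

definition mtrace :: "real mat \<Rightarrow> real" where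
  "mtrace S = (\<Sum>k<dim_row S. S $$ (k,k))"

(* nuclear (trace) norm: ||M||_* = trace (sqrt (M^T M)) = sum of singular values *)
definition nuclear_norm :: "real mat \<Rightarrow> real" where
  "nuclear_norm M = mtrace (THE S. S \<in> carrier_mat (dim_col M) (dim_col M) \<and> psd_mat S
                                 \<and> S * S = M\<^sup>T * M)"

definition max_abs_entry :: "real mat \<Rightarrow> real" where
  "max_abs_entry M = Max (insert 0 {\<bar>M $$ (i,j)\<bar> | i j. i < dim_row M \<and> j < dim_col M})"

definition P_T :: "real mat \<Rightarrow> real mat \<Rightarrow> real mat" where
  "P_T U0 M = (let P = U0 * U0\<^sup>T in P * M + M * P - P * M * P)"

definition is_cluster_matrix :: "nat \<Rightarrow> nat set \<Rightarrow> nat set set \<Rightarrow> real mat \<Rightarrow> bool" where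
  "is_cluster_matrix n V1 Cl Y \<longleftrightarrow> V1 \<subseteq> {0..<n} \<and> partition_on V1 Cl \<and>
     Y \<in> carrier_mat n n \<and>
     (\<forall>i<n. \<forall>j<n. Y $$ (i,j) = (if \<exists>C\<in>Cl. i \<in> C \<and> j \<in> C then 1 else 0))"

definition compact_decomp :: "real mat \<Rightarrow> nat \<Rightarrow> real mat \<Rightarrow> real mat \<Rightarrow> bool" where
  "compact_decomp Y r U0 S0 \<longleftrightarrow> U0 \<in> carrier_mat (dim_row Y) r \<and> S0 \<in> carrier_mat r r \<and>
     U0\<^sup>T * U0 = 1\<^sub>m r \<and> diagonal_mat S0 \<and> (\<forall>k<r. S0 $$ (k,k) > 0) \<and>
     Y = U0 * S0 * U0\<^sup>T"

definition feasible :: "nat \<Rightarrow> real mat \<Rightarrow> bool" where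
  "feasible n Y \<longleftrightarrow> Y \<in> carrier_mat n n \<and> (\<forall>i<n. \<forall>j<n. 0 \<le> Y $$ (i,j) \<and> Y $$ (i,j) \<le> 1)"

definition objective :: "nat \<Rightarrow> real mat \<Rightarrow> real \<Rightarrow> real \<Rightarrow> real mat \<Rightarrow> real" where
  "objective n A cA cAc Y =
     cA * (\<Sum>(i,j)\<in>{(i,j). i<n \<and> j<n \<and> A $$ (i,j) = 1}. Y $$ (i,j))
     - cAc * (\<Sum>(i,j)\<in>{(i,j). i<n \<and> j<n \<and> A $$ (i,j) = 0}. Y $$ (i,j))
     - 48 * sqrt (real n) * nuclear_norm Y"

end

theory Submission
  imports Defs "Jordan_Normal_Form.Spectral_Radius"
begin

lemma mult_entry:
  assumes "A \<in> carrier_mat n k" "B \<in> carrier_mat k m" "i < n" "j < m"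
  shows "(A * B) $$ (i,j) = (\<Sum>l<k. A $$ (i,l) * B $$ (l,j))"
  using assms by (auto simp: scalar_prod_def lessThan_atLeast0 intro!: sum.cong)

lemma mult_vec_entry:
  assumes "A \<in> carrier_mat n k" "v \<in> carrier_vec k" "i < n"
  shows "(A *\<^sub>v v) $ i = (\<Sum>l<k. A $$ (i,l) * v $ l)"
  using assms by (auto simp: scalar_prod_def lessThan_atLeast0 intro!: sum.cong)

lemma sprod_sum: 
  assumes "v \<in> carrier_vec n" "w \<in> carrier_vec n"
  shows "v \<bullet> w = (\<Sum>l<n. v $ l * w $ l)"
  using assms by (auto simp: scalar_prod_def lessThan_atLeast0)

lemma householder:
  fixes v :: "real vec"
  assumes v: "v \<in> carrier_vec n" and vv: "v \<bullet> v = 1" and n: "0 < n"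
  shows "\<exists>H. H \<in> carrier_mat n n \<and> H\<^sup>T = H \<and> H * H = 1\<^sub>m n \<and> H *\<^sub>v unit_vec n 0 = v"
proof (cases "v = unit_vec n 0")
  case True
  thus ?thesis by (intro exI[of _ "1\<^sub>m n"]) auto
next
  case False
  define w where "w = v - unit_vec n 0"
  have wc: "w \<in> carrier_vec n" unfolding w_def using v by simp
  have wi: "w $ i = v $ i - (if i = 0 then 1 else 0)" if "i < n" for i
    unfolding w_def using v that by (auto simp: unit_vec_def)
  have vs: "(\<Sum>i<n. v$i * v$i) = 1" using vv sprod_sum[OF v v] by simp
  have ww: "(\<Sum>i<n. w$i * w$i) = 2 - 2 * v$0"
  proof -
    have "(\<Sum>i<n. w$i * w$i) = (\<Sum>i<n. v$i * v$i - (if i = 0 then 2 * v$i else 0) + (if i = 0 then 1 else 0))"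
      by (intro sum.cong refl, simp add: wi algebra_simps)
    also have "\<dots> = 1 - 2 * v$0 + 1" using n vs by (simp add: sum.distrib sum_subtractf sum.delta)
    finally show ?thesis by simp
  qed
  have wne: "w \<noteq> 0\<^sub>v n"
  proof
    assume "w = 0\<^sub>v n"
    hence "v $ i = (if i = 0 then 1 else 0)" if "i < n" for i using wi[OF that] that by simp
    hence "v = unit_vec n 0" using v by (intro eq_vecI) (auto simp: unit_vec_def)
    thus False using False by simp
  qed
  then obtain k where k: "k < n" "w $ k \<noteq> 0" using wc by (metis eq_vecI carrier_vecD index_zero_vec)
  have "0 < w$k * w$k" using k(2) not_real_square_gt_zero by blast
  also have "\<dots> \<le> (\<Sum>i<n. w$i * w$i)" using k by (intro member_le_sum) auto
  finally have wpos: "0 < 2 - 2 * v$0" using ww by simp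
  define c where "c = 2 / (2 - 2 * v$0)"
  have cw: "c * (\<Sum>i<n. w$i * w$i) = 2" unfolding c_def ww using wpos by (simp add: field_simps)
  have cw0: "c * w$0 = -1" unfolding c_def using wi[OF n] wpos by (simp add: field_simps)
  define H where "H = mat n n (\<lambda>(i,j). (if i = j then 1 else 0) - c * w$i * w$j)"
  have Hc: "H \<in> carrier_mat n n" unfolding H_def by simp
  have HT: "H\<^sup>T = H" unfolding H_def by (rule eq_matI, auto)
  have HH: "H * H = 1\<^sub>m n"
  proof (rule eq_matI)
    fix i j assume ij: "i < dim_row (1\<^sub>m n)" "j < dim_col (1\<^sub>m n)"
    hence ij: "i < n" "j < n" by auto
    have "(H * H) $$ (i,j) = (\<Sum>l<n. ((if i = l then 1 else 0) - c * w$i * w$l) * ((if l = j then 1 else 0) - c * w$l * w$j))"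
      using ij by (subst mult_entry[OF Hc Hc]) (auto simp: H_def)
    also have "\<dots> = (\<Sum>l<n. (if i = l then (if l = j then 1 else 0) - c * w$l * w$j else 0)
         - (if l = j then c * w$i * w$l else 0) + (c * c * w$i * w$j) * (w$l * w$l))"
      by (intro sum.cong refl, auto simp: algebra_simps)
    also have "\<dots> = (if i = j then 1 else 0) - c * w$i * w$j - c * w$i * w$j + (c * c * w$i * w$j) * (\<Sum>l<n. w$l * w$l)"
    proof -
      have s1: "(\<Sum>l<n. if i = l then (if l = j then 1 else 0) - c * w$l * w$j else 0) = (if i = j then 1 else 0) - c * w$i * w$j"
        using ij by (subst sum.delta') auto
      have s2: "(\<Sum>l<n. if l = j then c * w$i * w$l else 0) = c * w$i * w$j"
        using ij by (subst sum.delta) auto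
      have s3: "(\<Sum>l<n. (c * c * w$i * w$j) * (w$l * w$l)) = (c * c * w$i * w$j) * (\<Sum>l<n. w$l * w$l)"
        by (rule sum_distrib_left[symmetric])
      show ?thesis unfolding sum.distrib sum_subtractf s1 s2 s3 ..
    qed
    also have "\<dots> = (if i = j then 1 else 0)"
    proof -
      have "(c * c * w$i * w$j) * (\<Sum>l<n. w$l * w$l) = c * w$i * w$j * (c * (\<Sum>l<n. w$l * w$l))" by simp
      also have "\<dots> = 2 * c * w$i * w$j" using cw by simp
      finally show ?thesis by simp
    qed
    finally show "(H * H) $$ (i,j) = 1\<^sub>m n $$ (i,j)" using ij by simp
  qed (use Hc in auto)
  have He: "H *\<^sub>v unit_vec n 0 = v"
  proof (rule eq_vecI)
    fix i assume "i < dim_vec v" hence i: "i < n" using v by simp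
    have "(H *\<^sub>v unit_vec n 0) $ i = (\<Sum>l<n. H $$ (i,l) * (if l = 0 then 1 else 0))"
      using i n by (simp add: mult_vec_entry[OF Hc] unit_vec_def)
    also have "\<dots> = (\<Sum>l<n. if l = 0 then H $$ (i,l) else 0)" by (intro sum.cong) auto
    also have "\<dots> = H $$ (i,0)" using n by (subst sum.delta) auto
    also have "\<dots> = (if i = 0 then 1 else 0) - w$i * (c * w$0)" unfolding H_def using i n by simp
    also have "\<dots> = v $ i" using cw0 wi[OF i] by simp
    finally show "(H *\<^sub>v unit_vec n 0) $ i = v $ i" .
  qed (use v Hc in auto)
  show ?thesis using Hc HT HH He by blast
qed

lemma real_sym_eigen:
  fixes A :: "real mat"
  assumes A: "A \<in> carrier_mat n n" and sym: "A\<^sup>T = A" and n: "0 < n"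
  shows "\<exists>e v. v \<in> carrier_vec n \<and> v \<bullet> v = 1 \<and> A *\<^sub>v v = e \<cdot>\<^sub>v v"
proof -
  let ?Ac = "map_mat complex_of_real A"
  have Ac: "?Ac \<in> carrier_mat n n" using A by auto
  from spectrum_non_empty[OF Ac n] obtain l where "eigenvalue ?Ac l"
    unfolding spectrum_def by auto
  then obtain w where w: "eigenvector ?Ac w l" unfolding eigenvalue_def by auto
  hence wc: "w \<in> carrier_vec n" "w \<noteq> 0\<^sub>v n" "?Ac *\<^sub>v w = l \<cdot>\<^sub>v w"
    using A unfolding eigenvector_def by auto
  have comp: "(\<Sum>j<n. complex_of_real (A$$(i,j)) * w$j) = l * w$i" if i: "i<n" for i
  proof -
    have "(?Ac *\<^sub>v w) $ i = (\<Sum>j<n. complex_of_real (A$$(i,j)) * w$j)"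
      using i A wc(1) by (auto simp: scalar_prod_def lessThan_atLeast0 intro!: sum.cong)
    moreover have "(l \<cdot>\<^sub>v w) $ i = l * w$i" using i wc by simp
    ultimately show ?thesis using wc(3) by metis
  qed
  define s where "s = (\<Sum>i<n. cnj (w$i) * (\<Sum>j<n. complex_of_real (A$$(i,j)) * w$j))"
  define N where "N = (\<Sum>i<n. cnj (w$i) * w$i)"
  have s1: "s = l * N" unfolding s_def N_def using comp
    by (simp add: sum_distrib_left mult.commute mult.left_commute)
  have symA: "A$$(i,j) = A$$(j,i)" if "i<n" "j<n" for i j
    using sym that A by (metis carrier_matD index_transpose_mat(1))
  have "cnj s = (\<Sum>i<n. \<Sum>j<n. w$i * complex_of_real (A$$(i,j)) * cnj (w$j))"
    unfolding s_def by (simp add: sum_distrib_left mult.assoc)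
  also have "\<dots> = (\<Sum>j<n. \<Sum>i<n. w$i * complex_of_real (A$$(i,j)) * cnj (w$j))"
    by (rule sum.swap)
  also have "\<dots> = s" unfolding s_def sum_distrib_left
    by (intro sum.cong refl, simp add: symA mult.commute mult.left_commute)
  finally have cs: "cnj s = s" .
  hence ims: "Im s = 0" by (metis complex_cnj_cancel_iff complex_eq_iff cnj.simps(2) neg_equal_zero)
  define r where "r = (\<Sum>i<n. (cmod (w$i))\<^sup>2)"
  have Nr: "N = complex_of_real r" unfolding N_def r_def of_real_sum
    by (rule sum.cong[OF refl], subst complex_norm_square, simp add: mult.commute)
  obtain i where i: "i < n" "w $ i \<noteq> 0" using wc by (metis eq_vecI carrier_vecD index_zero_vec)
  have "0 < (cmod (w$i))\<^sup>2" using i by simp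
  also have "\<dots> \<le> r" unfolding r_def using i by (intro member_le_sum) auto
  finally have r0: "0 < r" .
  have "Im s = Im l * r" using s1 Nr by simp
  hence iml: "Im l = 0" using ims r0 by simp
  hence lre: "l = complex_of_real (Re l)" by (simp add: complex_eq_iff)
  have "poly (char_poly ?Ac) l = 0" using \<open>eigenvalue ?Ac l\<close> eigenvalue_root_char_poly[OF Ac] by simp
  hence "poly (map_poly of_real (char_poly A)) (complex_of_real (Re l)) = 0"
    using of_real_hom.char_poly_hom[OF A] lre by metis
  hence "poly (char_poly A) (Re l) = 0" by (simp only: of_real_hom.poly_map_poly of_real_eq_0_iff)
  hence "eigenvalue A (Re l)" using eigenvalue_root_char_poly[OF A] by simp
  then obtain u where u: "eigenvector A u (Re l)" unfolding eigenvalue_def by auto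
  hence uc: "u \<in> carrier_vec n" "u \<noteq> 0\<^sub>v n" "A *\<^sub>v u = Re l \<cdot>\<^sub>v u"
    using A unfolding eigenvector_def by auto
  have uu: "u \<bullet> u > 0" using uc conjugate_square_greater_0_vec[OF uc(1)] by simp
  define v where "v = (1 / sqrt (u \<bullet> u)) \<cdot>\<^sub>v u"
  have vc: "v \<in> carrier_vec n" unfolding v_def using uc by simp
  have "v \<bullet> v = (1 / sqrt (u \<bullet> u)) * (1 / sqrt (u \<bullet> u)) * (u \<bullet> u)"
    unfolding v_def using uc by (simp add: smult_scalar_prod_distrib scalar_prod_smult_right)
  also have "\<dots> = 1" using uu by (simp add: field_simps)
  finally have vv: "v \<bullet> v = 1" .
  have "A *\<^sub>v v = Re l \<cdot>\<^sub>v v" unfolding v_def using uc A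
    by (simp add: mult_mat_vec smult_smult_assoc mult.commute)
  thus ?thesis using vc vv by blast
qed


definition bd :: "nat \<Rightarrow> real \<Rightarrow> real mat \<Rightarrow> real mat" where
  "bd m x M = mat (Suc m) (Suc m) (\<lambda>(i,j). if i = 0 \<and> j = 0 then x else if i = 0 \<or> j = 0 then 0 else M $$ (i-1, j-1))"

lemma bd_carrier[simp]: "bd m x M \<in> carrier_mat (Suc m) (Suc m)"
  unfolding bd_def by simp

lemma bd_mult:
  assumes M: "M \<in> carrier_mat m m" and N: "N \<in> carrier_mat m m"
  shows "bd m a M * bd m b N = bd m (a*b) (M*N)"
proof (rule eq_matI)
  fix i j assume "i < dim_row (bd m (a*b) (M*N))" "j < dim_col (bd m (a*b) (M*N))"
  hence ij: "i < Suc m" "j < Suc m" by (auto simp: bd_def)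
  have "(bd m a M * bd m b N) $$ (i,j) = (\<Sum>l<Suc m. bd m a M $$ (i,l) * bd m b N $$ (l,j))"
    using ij by (subst mult_entry[OF bd_carrier bd_carrier]) auto
  also have "\<dots> = bd m a M $$ (i,0) * bd m b N $$ (0,j) + (\<Sum>l<m. bd m a M $$ (i,Suc l) * bd m b N $$ (Suc l,j))"
    by (rule sum.lessThan_Suc_shift)
  also have "\<dots> = bd m (a*b) (M*N) $$ (i,j)"
  proof (cases i)
    case 0
    thus ?thesis using ij by (cases j) (auto simp: bd_def)
  next
    case (Suc i')
    show ?thesis
    proof (cases j)
      case 0 thus ?thesis using ij Suc by (auto simp: bd_def)
    next
      case (Suc j')
      thus ?thesis using ij \<open>i = Suc i'\<close> M N by (auto simp: bd_def scalar_prod_def lessThan_atLeast0)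
    qed
  qed
  finally show "(bd m a M * bd m b N) $$ (i,j) = bd m (a*b) (M*N) $$ (i,j)" .
qed (auto simp: bd_def)

lemma bd_transpose:
  assumes M: "M \<in> carrier_mat m m"
  shows "(bd m a M)\<^sup>T = bd m a (M\<^sup>T)"
  using M by (intro eq_matI) (auto simp: bd_def)

lemma bd_one: "bd m 1 (1\<^sub>m m) = 1\<^sub>m (Suc m)"
  by (intro eq_matI) (auto simp: bd_def)

lemmas sq_assoc = assoc_mult_mat[of _ N N _ N _ N] mult_carrier_mat[of _ N N _ N] for N
lemmas sq_assoc_v = assoc_mult_mat_vec[of _ N N _ N] mult_carrier_mat[of _ N N _ N] for N

lemma spectral:
  fixes A :: "real mat"
  assumes "A \<in> carrier_mat n n" "A\<^sup>T = A"
  shows "\<exists>Q D. Q \<in> carrier_mat n n \<and> Q\<^sup>T * Q = 1\<^sub>m n \<and> D \<in> carrier_mat n n \<and> diagonal_mat D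
            \<and> A = Q * D * Q\<^sup>T"
  using assms
proof (induction n arbitrary: A)
  case 0
  show ?case
    by (rule exI[of _ "1\<^sub>m 0"], rule exI[of _ "0\<^sub>m 0 0"]) (use 0 in \<open>auto simp: diagonal_mat_def intro!: eq_matI\<close>)
next
  case (Suc m)
  note A = Suc.prems(1) and sym = Suc.prems(2)
  obtain e v where v: "v \<in> carrier_vec (Suc m)" "v \<bullet> v = 1" "A *\<^sub>v v = e \<cdot>\<^sub>v v"
    using real_sym_eigen[OF A sym] by auto
  obtain H where H: "H \<in> carrier_mat (Suc m) (Suc m)" "H\<^sup>T = H" "H * H = 1\<^sub>m (Suc m)"
    "H *\<^sub>v unit_vec (Suc m) 0 = v"
    using householder[OF v(1) v(2)] by auto
  define A' where "A' = H * A * H"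
  have A'c: "A' \<in> carrier_mat (Suc m) (Suc m)" unfolding A'_def using A H by simp
  have A'T: "A'\<^sup>T = A'"
  proof -
    have "A'\<^sup>T = H\<^sup>T * (H * A)\<^sup>T" unfolding A'_def using A H by (intro transpose_mult) auto
    also have "(H * A)\<^sup>T = A\<^sup>T * H\<^sup>T" using A H by (intro transpose_mult) auto
    finally show ?thesis unfolding A'_def using A H sym by simp
  qed
  have Hv: "H *\<^sub>v v = unit_vec (Suc m) 0"
  proof -
    have "H *\<^sub>v v = H *\<^sub>v (H *\<^sub>v unit_vec (Suc m) 0)" using H by simp
    also have "\<dots> = (H * H) *\<^sub>v unit_vec (Suc m) 0"
      using H by (intro assoc_mult_mat_vec[symmetric]) auto
    finally show ?thesis using H by simp
  qed
  have A'e: "A' *\<^sub>v unit_vec (Suc m) 0 = e \<cdot>\<^sub>v unit_vec (Suc m) 0"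
  proof -
    have "A' *\<^sub>v unit_vec (Suc m) 0 = (H * A) *\<^sub>v (H *\<^sub>v unit_vec (Suc m) 0)"
      unfolding A'_def using A H by (intro assoc_mult_mat_vec) auto
    also have "\<dots> = H *\<^sub>v (A *\<^sub>v v)" unfolding H(4) using A H v by (intro assoc_mult_mat_vec) auto
    also have "\<dots> = e \<cdot>\<^sub>v (H *\<^sub>v v)" using v H by (simp add: mult_mat_vec)
    finally show ?thesis using Hv by simp
  qed
  have col0: "A' $$ (i,0) = (if i = 0 then e else 0)" if i: "i < Suc m" for i
  proof -
    have "(A' *\<^sub>v unit_vec (Suc m) 0) $ i = (\<Sum>l<Suc m. A' $$ (i,l) * (if l = 0 then 1 else 0))"
      using i by (simp add: mult_vec_entry[OF A'c] unit_vec_def)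
    also have "\<dots> = (\<Sum>l<Suc m. if l = 0 then A' $$ (i,l) else 0)" by (intro sum.cong) auto
    also have "\<dots> = A' $$ (i,0)" by (subst sum.delta) auto
    finally have "A' $$ (i,0) = (e \<cdot>\<^sub>v unit_vec (Suc m) 0) $ i" using A'e by simp
    thus ?thesis using i by (cases "i = 0") auto
  qed
  have row0: "A' $$ (0,j) = (if j = 0 then e else 0)" if j: "j < Suc m" for j
  proof -
    have "A' $$ (0,j) = A'\<^sup>T $$ (j,0)" using j A'c by simp
    thus ?thesis using A'T col0[OF j] by simp
  qed
  define A3 where "A3 = mat m m (\<lambda>(i,j). A' $$ (Suc i, Suc j))"
  have A3c: "A3 \<in> carrier_mat m m" unfolding A3_def by simp
  have A3T: "A3\<^sup>T = A3"
  proof (rule eq_matI)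
    fix i j assume "i < dim_row A3" "j < dim_col A3"
    hence ij: "i < m" "j < m" unfolding A3_def by auto
    have "A' $$ (Suc j, Suc i) = A'\<^sup>T $$ (Suc i, Suc j)" using ij A'c by simp
    thus "A3\<^sup>T $$ (i,j) = A3 $$ (i,j)" unfolding A3_def using ij A'T by simp
  qed (auto simp: A3_def)
  obtain O3 D3 where O3: "O3 \<in> carrier_mat m m" "O3\<^sup>T * O3 = 1\<^sub>m m" "D3 \<in> carrier_mat m m"
    "diagonal_mat D3" "A3 = O3 * D3 * O3\<^sup>T"
    using Suc.IH[OF A3c A3T] by auto
  have A'bd: "A' = bd m e A3"
  proof (rule eq_matI)
    fix i j assume "i < dim_row (bd m e A3)" "j < dim_col (bd m e A3)"
    hence ij: "i < Suc m" "j < Suc m" by (auto simp: bd_def)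
    show "A' $$ (i,j) = bd m e A3 $$ (i,j)"
    proof (cases "i = 0 \<or> j = 0")
      case True
      thus ?thesis using ij col0 row0 by (auto simp: bd_def)
    next
      case False
      then obtain i' j' where "i = Suc i'" "j = Suc j'" by (metis not0_implies_Suc)
      thus ?thesis using ij by (auto simp: bd_def A3_def)
    qed
  qed (use A'c in \<open>auto simp: bd_def\<close>)
  define B where "B = bd m 1 O3"
  define D where "D = bd m e D3"
  have Bc: "B \<in> carrier_mat (Suc m) (Suc m)" "D \<in> carrier_mat (Suc m) (Suc m)"
    unfolding B_def D_def by auto
  have BT: "B\<^sup>T = bd m 1 (O3\<^sup>T)" unfolding B_def by (rule bd_transpose[OF O3(1)])
  have A'eq: "A' = B * D * B\<^sup>T"
    unfolding A'bd B_def D_def bd_transpose[OF O3(1)]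
    using O3 by (simp add: bd_mult)
  have BB: "B\<^sup>T * B = 1\<^sub>m (Suc m)" unfolding B_def bd_transpose[OF O3(1)] using O3 by (simp add: bd_mult bd_one)
  have AA': "A = H * A' * H"
  proof -
    have "H * A' * H = (H * H) * A * (H * H)" unfolding A'_def using H(1) A by (simp add: sq_assoc[where N="Suc m"])
    thus ?thesis using H A by simp
  qed
  define Q where "Q = H * B"
  have Oc: "Q \<in> carrier_mat (Suc m) (Suc m)" unfolding Q_def using H Bc by simp
  have QT: "Q\<^sup>T = B\<^sup>T * H" unfolding Q_def using H Bc by (simp add: transpose_mult[of _ "Suc m" "Suc m"])
  have "Q\<^sup>T * Q = B\<^sup>T * (H * H) * B" unfolding QT unfolding Q_def using H(1) Bc by (simp add: sq_assoc[where N="Suc m"])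
  hence OO: "Q\<^sup>T * Q = 1\<^sub>m (Suc m)" using H Bc BB by simp
  have "A = Q * D * Q\<^sup>T" unfolding AA' unfolding A'eq QT unfolding Q_def using H(1) Bc by (simp add: sq_assoc[where N="Suc m"])
  moreover have "diagonal_mat D" using O3(3,4) unfolding D_def diagonal_mat_def bd_def
    by auto
  ultimately show ?case using Oc OO Bc by blast
qed


definition Dg :: "nat \<Rightarrow> (nat \<Rightarrow> real) \<Rightarrow> real mat" where
  "Dg n d = mat n n (\<lambda>(i,j). if i = j then d i else 0)"

lemma Dg_carrier[simp]: "Dg n d \<in> carrier_mat n n" unfolding Dg_def by simp

lemma Dg_T[simp]: "(Dg n d)\<^sup>T = Dg n d" unfolding Dg_def by (intro eq_matI) auto

lemma mult_Dg_entry: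
  assumes X: "X \<in> carrier_mat k n" and ij: "j < k" "i < n"
  shows "(X * Dg n d) $$ (j,i) = X $$ (j,i) * d i"
proof -
  have "(X * Dg n d) $$ (j,i) = (\<Sum>l<n. X $$ (j,l) * (if l = i then d i else 0))"
    using ij by (subst mult_entry[OF X Dg_carrier]) (auto simp: Dg_def intro!: sum.cong)
  also have "\<dots> = (\<Sum>l<n. if l = i then X $$ (j,l) * d i else 0)" by (intro sum.cong) auto
  also have "\<dots> = X $$ (j,i) * d i" using ij by (subst sum.delta) auto
  finally show ?thesis .
qed

lemma col_mult_Dg:
  assumes X: "X \<in> carrier_mat k n" and i: "i < n"
  shows "col (X * Dg n d) i = d i \<cdot>\<^sub>v col X i"
  using X i by (intro eq_vecI) (auto simp: mult_Dg_entry[OF X] col_def)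

lemma Dg_mult_Dg: "Dg n d * Dg n e = Dg n (\<lambda>i. d i * e i)"
proof (rule eq_matI)
  fix i j assume "i < dim_row (Dg n (\<lambda>i. d i * e i))" "j < dim_col (Dg n (\<lambda>i. d i * e i))"
  hence ij: "i < n" "j < n" by (auto simp: Dg_def)
  show "(Dg n d * Dg n e) $$ (i,j) = Dg n (\<lambda>i. d i * e i) $$ (i,j)"
    by (simp only: mult_Dg_entry[OF Dg_carrier ij]) (use ij in \<open>simp add: Dg_def\<close>)
qed (auto simp: Dg_def)

lemma Dg_mult_vec:
  assumes w: "w \<in> carrier_vec n"
  shows "Dg n d *\<^sub>v w = vec n (\<lambda>i. d i * w $ i)"
proof (rule eq_vecI)
  fix i assume "i < dim_vec (vec n (\<lambda>i. d i * w $ i))" hence i: "i < n" by simp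
  have "(Dg n d *\<^sub>v w) $ i = (\<Sum>l<n. (if i = l then d i else 0) * w $ l)"
    using i by (subst mult_vec_entry[OF Dg_carrier w]) (auto simp: Dg_def intro!: sum.cong)
  also have "\<dots> = (\<Sum>l<n. if i = l then d i * w $ l else 0)" by (intro sum.cong) auto
  also have "\<dots> = d i * w $ i" using i by (subst sum.delta') auto
  finally show "(Dg n d *\<^sub>v w) $ i = vec n (\<lambda>i. d i * w $ i) $ i" using i by simp
qed (auto simp: Dg_def)

lemma real_vv_ge0: "0 \<le> (v :: real vec) \<bullet> v"
  unfolding scalar_prod_def by (intro sum_nonneg) auto

lemma real_vv_0:
  assumes v: "(v :: real vec) \<in> carrier_vec n" and vv: "v \<bullet> v = 0"
  shows "v = 0\<^sub>v n"
proof (rule eq_vecI)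
  fix i assume "i < dim_vec (0\<^sub>v n)" hence i: "i < n" by simp
  have "(\<Sum>l<n. v $ l * v $ l) = 0" using vv sprod_sum[OF v v] by simp
  hence "\<forall>l\<in>{..<n}. v $ l * v $ l = 0" by (subst sum_nonneg_eq_0_iff[symmetric]) auto
  thus "v $ i = 0\<^sub>v n $ i" using i by auto
qed (use v in auto)

lemma psd_unique:
  fixes Q T :: "real mat"
  assumes Q: "Q \<in> carrier_mat n n" and QQ: "Q\<^sup>T * Q = 1\<^sub>m n" and QQ': "Q * Q\<^sup>T = 1\<^sub>m n"
    and d: "\<forall>i<n. 0 \<le> d i"
    and T: "T \<in> carrier_mat n n" and Tpsd: "psd_mat T"
    and TT: "T * T = (Q * Dg n d * Q\<^sup>T) * (Q * Dg n d * Q\<^sup>T)"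
  shows "T = Q * Dg n d * Q\<^sup>T"
proof -
  define G where "G = Dg n d"
  define S where "S = Q * G * Q\<^sup>T"
  have Gc: "G \<in> carrier_mat n n" unfolding G_def by simp
  have Sc: "S \<in> carrier_mat n n" unfolding S_def using Q Gc by simp
  have TT': "T * T = S * S" using TT unfolding S_def G_def .
  have TTr: "T\<^sup>T = T" using Tpsd T unfolding psd_mat_def by auto
  have SQ: "S * Q = Q * G"
  proof -
    have "S * Q = Q * G * (Q\<^sup>T * Q)" unfolding S_def using Q Gc by (simp add: sq_assoc[where N=n])
    thus ?thesis using QQ Q Gc by simp
  qed
  have TQ: "T *\<^sub>v col Q i = S *\<^sub>v col Q i" if i: "i < n" for i
  proof -
    define q where "q = col Q i"
    have qc: "q \<in> carrier_vec n" unfolding q_def using Q i by simp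
    have Sq: "S *\<^sub>v q = d i \<cdot>\<^sub>v q"
    proof -
      have "S *\<^sub>v q = col (S * Q) i" unfolding q_def using Sc Q i by (intro col_mult2[symmetric])
      also have "\<dots> = d i \<cdot>\<^sub>v q" unfolding SQ q_def G_def using col_mult_Dg[OF Q i] .
      finally show ?thesis .
    qed
    have TTq: "T *\<^sub>v (T *\<^sub>v q) = (d i * d i) \<cdot>\<^sub>v q"
    proof -
      have "T *\<^sub>v (T *\<^sub>v q) = (T * T) *\<^sub>v q" using T qc by (intro assoc_mult_mat_vec[symmetric]) auto
      also have "\<dots> = S *\<^sub>v (S *\<^sub>v q)" unfolding TT' using Sc qc by (intro assoc_mult_mat_vec) auto
      also have "\<dots> = (d i * d i) \<cdot>\<^sub>v q" unfolding Sq using Sc qc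
        by (simp add: mult_mat_vec Sq smult_smult_assoc)
      finally show ?thesis .
    qed
    define u where "u = T *\<^sub>v q - d i \<cdot>\<^sub>v q"
    have uc: "u \<in> carrier_vec n" unfolding u_def using T qc by simp
    have Tu: "T *\<^sub>v u = (- d i) \<cdot>\<^sub>v u"
    proof -
      have "T *\<^sub>v u = T *\<^sub>v (T *\<^sub>v q) - T *\<^sub>v (d i \<cdot>\<^sub>v q)"
        unfolding u_def using T qc by (intro mult_minus_distrib_mat_vec) auto
      also have "\<dots> = (d i * d i) \<cdot>\<^sub>v q - d i \<cdot>\<^sub>v (T *\<^sub>v q)" unfolding TTq using T qc by (simp add: mult_mat_vec)
      also have "\<dots> = (- d i) \<cdot>\<^sub>v u" unfolding u_def using T qc
        by (intro eq_vecI) (auto simp: algebra_simps)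
      finally show ?thesis .
    qed
    have "0 \<le> u \<bullet> (T *\<^sub>v u)" using Tpsd uc T unfolding psd_mat_def by auto
    hence ineq: "0 \<le> - d i * (u \<bullet> u)" unfolding Tu using uc by (simp add: scalar_prod_smult_right)
    have "u = 0\<^sub>v n"
    proof (cases "d i = 0")
      case False
      hence "0 < d i" using d i by force
      hence "u \<bullet> u \<le> 0" using ineq by (simp add: mult_le_0_iff)
      hence "u \<bullet> u = 0" using real_vv_ge0[of u] by linarith
      thus ?thesis using real_vv_0[OF uc] by simp
    next
      case True
      hence u': "u = T *\<^sub>v q" unfolding u_def using T qc by (intro eq_vecI) auto
      have Tu0: "T *\<^sub>v u = 0\<^sub>v n" using Tu True uc by (intro eq_vecI) auto
      have "u \<bullet> u = u \<bullet> (T *\<^sub>v q)" using u' by simp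
      also have "\<dots> = (T\<^sup>T *\<^sub>v u) \<bullet> q" using transpose_vec_mult_scalar[OF T qc uc] by simp
      also have "\<dots> = 0" unfolding TTr Tu0 using qc by simp
      finally show ?thesis using real_vv_0[OF uc] by simp
    qed
    have "T *\<^sub>v q = d i \<cdot>\<^sub>v q"
    proof (rule eq_vecI)
      fix j assume "j < dim_vec (d i \<cdot>\<^sub>v q)" hence j: "j < n" using qc by simp
      have "u $ j = 0" using \<open>u = 0\<^sub>v n\<close> j by simp
      thus "(T *\<^sub>v q) $ j = (d i \<cdot>\<^sub>v q) $ j" using j T qc unfolding u_def by simp
    qed (use T qc in auto)
    thus ?thesis unfolding q_def[symmetric] Sq by simp
  qed
  have TQSQ: "T * Q = S * Q"
  proof (rule eq_matI)
    fix j i assume ji: "j < dim_row (S * Q)" "i < dim_col (S * Q)"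
    hence ji: "j < n" "i < n" using Sc Q by auto
    have "(T * Q) $$ (j,i) = col (T * Q) i $ j" using ji T Q by simp
    also have "\<dots> = (T *\<^sub>v col Q i) $ j" using T Q ji by (subst col_mult2) auto
    also have "\<dots> = (S *\<^sub>v col Q i) $ j" using TQ[OF ji(2)] by simp
    also have "\<dots> = col (S * Q) i $ j" using Sc Q ji by (subst col_mult2) auto
    also have "\<dots> = (S * Q) $$ (j,i)" using ji Sc Q by simp
    finally show "(T * Q) $$ (j,i) = (S * Q) $$ (j,i)" .
  qed (use T Sc Q in auto)
  have "T = T * (Q * Q\<^sup>T)" using QQ' T by simp
  also have "\<dots> = (T * Q) * Q\<^sup>T" using T Q by simp
  also have "\<dots> = (S * Q) * Q\<^sup>T" unfolding TQSQ ..
  also have "\<dots> = S * (Q * Q\<^sup>T)" using Sc Q by simp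
  also have "\<dots> = S" using QQ' Sc by simp
  finally show ?thesis unfolding S_def G_def .
qed


lemma transpose_sq3:
  fixes A B C :: "real mat"
  assumes "A \<in> carrier_mat n n" "B \<in> carrier_mat n n" "C \<in> carrier_mat n n"
  shows "(A * B * C)\<^sup>T = C\<^sup>T * B\<^sup>T * A\<^sup>T"
proof -
  have "(A * B * C)\<^sup>T = C\<^sup>T * (A * B)\<^sup>T" by (rule transpose_mult[of _ n n _ n]) (use assms in auto)
  also have "(A * B)\<^sup>T = B\<^sup>T * A\<^sup>T" by (rule transpose_mult[of _ n n _ n]) (use assms in auto)
  finally show ?thesis using assms by simp
qed

lemma nuclear_facts:
  fixes Y :: "real mat"
  assumes Y: "Y \<in> carrier_mat n n"
  shows "\<exists>Q d. Q \<in> carrier_mat n n \<and> Q\<^sup>T * Q = 1\<^sub>m n \<and> Q * Q\<^sup>T = 1\<^sub>m n \<and> (\<forall>i<n. 0 \<le> d i)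
     \<and> (\<forall>i<n. ((Y * Q)\<^sup>T * (Y * Q)) $$ (i,i) = d i * d i) \<and> nuclear_norm Y = (\<Sum>i<n. d i)
     \<and> (\<forall>T. T \<in> carrier_mat n n \<and> psd_mat T \<and> T * T = Y\<^sup>T * Y \<longrightarrow> nuclear_norm Y = mtrace T)"
proof -
  define M where "M = Y\<^sup>T * Y"
  have Mc: "M \<in> carrier_mat n n" unfolding M_def using Y by simp
  have MT: "M\<^sup>T = M" unfolding M_def using Y by (simp add: transpose_mult[of _ n n _ n])
  obtain Q D where QD: "Q \<in> carrier_mat n n" "Q\<^sup>T * Q = 1\<^sub>m n" "D \<in> carrier_mat n n" "diagonal_mat D"
     "M = Q * D * Q\<^sup>T" using spectral[OF Mc MT] by auto
  note Q = QD(1)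
  have QQ': "Q * Q\<^sup>T = 1\<^sub>m n" using mat_mult_left_right_inverse[of "Q\<^sup>T" n Q] QD by simp
  have "(Y * Q)\<^sup>T * (Y * Q) = Q\<^sup>T * M * Q" unfolding M_def using Y Q
    by (simp add: transpose_mult[of _ n n _ n] sq_assoc[where N=n])
  also have "\<dots> = (Q\<^sup>T * Q) * D * (Q\<^sup>T * Q)" unfolding QD(5) using Q QD(3) by (simp add: sq_assoc[where N=n])
  also have "\<dots> = D" using QD by simp
  finally have YQ: "(Y * Q)\<^sup>T * (Y * Q) = D" .
  define lam where "lam i = D $$ (i,i)" for i
  have lam0: "0 \<le> lam i" if i: "i < n" for i
  proof -
    have "lam i = (\<Sum>l<n. (Y * Q)\<^sup>T $$ (i,l) * (Y * Q) $$ (l,i))" unfolding lam_def YQ[symmetric]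
      using i Y Q by (subst mult_entry[of _ n n _ n]) auto
    also have "\<dots> = (\<Sum>l<n. (Y * Q) $$ (l,i) * (Y * Q) $$ (l,i))"
      using i Y Q by (intro sum.cong) auto
    also have "\<dots> \<ge> 0" by (intro sum_nonneg) auto
    finally show ?thesis .
  qed
  have DDg: "D = Dg n lam" using QD(3,4) unfolding Dg_def lam_def diagonal_mat_def
    by (intro eq_matI) auto
  define d where "d i = sqrt (lam i)" for i
  have d0: "\<forall>i<n. 0 \<le> d i" unfolding d_def using lam0 by simp
  have dd: "d i * d i = lam i" if "i < n" for i unfolding d_def using lam0[OF that] by simp
  define G where "G = Dg n d"
  have Gc: "G \<in> carrier_mat n n" unfolding G_def by simp
  have GG: "G * G = D" unfolding G_def DDg Dg_mult_Dg
    by (intro eq_matI) (auto simp: Dg_def dd)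
  define S where "S = Q * G * Q\<^sup>T"
  have Sc: "S \<in> carrier_mat n n" unfolding S_def using Q Gc by simp
  have SS: "S * S = M"
  proof -
    have "S * S = Q * G * (Q\<^sup>T * Q) * G * Q\<^sup>T" unfolding S_def using Q Gc by (simp add: sq_assoc[where N=n])
    also have "\<dots> = Q * (G * G) * Q\<^sup>T" using Q Gc QD(2) by (simp add: sq_assoc[where N=n])
    finally show ?thesis unfolding GG QD(5) .
  qed
  have ST: "S\<^sup>T = S" unfolding S_def using Q Gc by (simp add: transpose_sq3 G_def)
  have Spsd: "psd_mat S" unfolding psd_mat_def
  proof (intro conjI ballI)
    show "S \<in> carrier_mat (dim_row S) (dim_row S)" using Sc by simp
    show "S\<^sup>T = S" by (rule ST)
    fix v :: "real vec" assume "v \<in> carrier_vec (dim_row S)"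
    hence v: "v \<in> carrier_vec n" using Sc by simp
    define w where "w = Q\<^sup>T *\<^sub>v v"
    have wc: "w \<in> carrier_vec n" unfolding w_def using Q v by simp
    have "S *\<^sub>v v = Q *\<^sub>v (G *\<^sub>v w)" unfolding S_def w_def using Q Gc v by (simp add: sq_assoc_v[where N=n])
    hence "v \<bullet> (S *\<^sub>v v) = (Q\<^sup>T *\<^sub>v v) \<bullet> (G *\<^sub>v w)"
      using transpose_vec_mult_scalar[of Q n n "G *\<^sub>v w" v] Q Gc wc v by simp
    also have "\<dots> = (\<Sum>l<n. w $ l * (d l * w $ l))" unfolding w_def[symmetric]
      unfolding G_def Dg_mult_vec[OF wc] using wc by (subst sprod_sum[of _ n]) auto
    also have "\<dots> = (\<Sum>l<n. d l * (w $ l * w $ l))" by (simp add: algebra_simps)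
    also have "\<dots> \<ge> 0" using d0 by (intro sum_nonneg) auto
    finally show "0 \<le> v \<bullet> (S *\<^sub>v v)" .
  qed
  have the: "(THE S'. S' \<in> carrier_mat (dim_col Y) (dim_col Y) \<and> psd_mat S' \<and> S' * S' = Y\<^sup>T * Y) = S"
  proof (rule the_equality)
    show "S \<in> carrier_mat (dim_col Y) (dim_col Y) \<and> psd_mat S \<and> S * S = Y\<^sup>T * Y"
      using Sc Spsd SS Y unfolding M_def by simp
    fix T assume "T \<in> carrier_mat (dim_col Y) (dim_col Y) \<and> psd_mat T \<and> T * T = Y\<^sup>T * Y"
    hence T: "T \<in> carrier_mat n n" "psd_mat T" "T * T = S * S" using Y SS unfolding M_def by auto
    show "T = S" unfolding S_def G_def using psd_unique[OF Q QD(2) QQ' d0 T(1,2)] T(3)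
      unfolding S_def G_def by simp
  qed
  have "mtrace S = (\<Sum>i<n. S $$ (i,i))" unfolding mtrace_def using Sc by simp
  also have "\<dots> = (\<Sum>i<n. \<Sum>k<n. Q $$ (i,k) * d k * Q $$ (i,k))"
  proof (intro sum.cong refl)
    fix i assume "i \<in> {..<n}" hence i: "i < n" by simp
    have "S $$ (i,i) = (\<Sum>k<n. (Q * G) $$ (i,k) * Q\<^sup>T $$ (k,i))"
      unfolding S_def using i Q Gc by (subst mult_entry[of _ n n _ n]) auto
    also have "\<dots> = (\<Sum>k<n. Q $$ (i,k) * d k * Q $$ (i,k))"
      using i Q unfolding G_def by (intro sum.cong refl) (simp add: mult_Dg_entry[OF Q])
    finally show "S $$ (i,i) = \<dots>" .
  qed
  also have "\<dots> = (\<Sum>k<n. d k * (\<Sum>i<n. Q $$ (i,k) * Q $$ (i,k)))"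
    by (subst sum.swap) (simp add: sum_distrib_left mult.commute mult.left_commute)
  also have "\<dots> = (\<Sum>k<n. d k)"
  proof (intro sum.cong refl)
    fix k assume "k \<in> {..<n}" hence k: "k < n" by simp
    have "(\<Sum>i<n. Q $$ (i,k) * Q $$ (i,k)) = (Q\<^sup>T * Q) $$ (k,k)"
      using k Q by (subst mult_entry[of _ n n _ n]) auto
    thus "d k * (\<Sum>i<n. Q $$ (i,k) * Q $$ (i,k)) = d k" using QD(2) k by simp
  qed
  finally have nuc: "nuclear_norm Y = (\<Sum>i<n. d i)" unfolding nuclear_norm_def the .
  have "\<forall>i<n. ((Y * Q)\<^sup>T * (Y * Q)) $$ (i,i) = d i * d i" unfolding YQ using dd lam_def by simp
  moreover have "\<forall>T. T \<in> carrier_mat n n \<and> psd_mat T \<and> T * T = Y\<^sup>T * Y \<longrightarrow> nuclear_norm Y = mtrace T"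
  proof (intro allI impI)
    fix T assume T: "T \<in> carrier_mat n n \<and> psd_mat T \<and> T * T = Y\<^sup>T * Y"
    have "T = S" unfolding S_def G_def using psd_unique[OF Q QD(2) QQ' d0] T SS
      unfolding S_def G_def M_def by simp
    thus "nuclear_norm Y = mtrace T" unfolding nuclear_norm_def the by simp
  qed
  ultimately show ?thesis using Q QD(2) QQ' d0 nuc by blast
qed


lemma cs_aux:
  fixes a b :: "nat \<Rightarrow> real"
  assumes aa: "(\<Sum>i<n. a i * a i) = D * D" and D: "0 \<le> D" and bb: "(\<Sum>i<n. b i * b i) \<le> 1"
  shows "(\<Sum>i<n. a i * b i) \<le> D"
proof (cases "D = 0")
  case True
  hence "\<forall>i\<in>{..<n}. a i * a i = 0" using aa by (subst sum_nonneg_eq_0_iff[symmetric]) auto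
  hence "\<forall>i\<in>{..<n}. a i = 0" by simp
  thus ?thesis using True by simp
next
  case False
  hence D0: "0 < D" using D by simp
  have "a i * b i \<le> (a i * a i) / (2 * D) + (D / 2) * (b i * b i)" for i
  proof -
    have "0 \<le> (a i - D * b i) * (a i - D * b i)" by simp
    hence "2 * D * (a i * b i) \<le> a i * a i + D * D * (b i * b i)" by (simp add: algebra_simps)
    thus ?thesis using D0 by (simp add: field_simps)
  qed
  hence "(\<Sum>i<n. a i * b i) \<le> (\<Sum>i<n. (a i * a i) / (2 * D) + (D / 2) * (b i * b i))"
    by (intro sum_mono) auto
  also have "\<dots> = (D * D) / (2 * D) + (D / 2) * (\<Sum>i<n. b i * b i)"
    by (simp add: sum.distrib sum_divide_distrib[symmetric] sum_distrib_left[symmetric] aa)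
  also have "\<dots> \<le> (D * D) / (2 * D) + (D / 2) * 1" using bb D0 by (intro add_left_mono mult_left_mono) auto
  also have "\<dots> = D" using D0 by (simp add: field_simps)
  finally show ?thesis .
qed

lemma nuc_ge:
  fixes Y Z :: "real mat"
  assumes Y: "Y \<in> carrier_mat n n" and Z: "Z \<in> carrier_mat n n"
    and contr: "\<forall>x\<in>carrier_vec n. (Z *\<^sub>v x) \<bullet> (Z *\<^sub>v x) \<le> x \<bullet> x"
  shows "(\<Sum>i<n. \<Sum>j<n. Z $$ (i,j) * Y $$ (i,j)) \<le> nuclear_norm Y"
proof -
  obtain Q d where Q: "Q \<in> carrier_mat n n" "Q\<^sup>T * Q = 1\<^sub>m n" "Q * Q\<^sup>T = 1\<^sub>m n" "\<forall>i<n. 0 \<le> d i"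
    "\<forall>i<n. ((Y * Q)\<^sup>T * (Y * Q)) $$ (i,i) = d i * d i" "nuclear_norm Y = (\<Sum>i<n. d i)"
    using nuclear_facts[OF Y] by blast
  define YQ where "YQ = Y * Q"
  define ZQ where "ZQ = Z * Q"
  have YQc: "YQ \<in> carrier_mat n n" "ZQ \<in> carrier_mat n n" unfolding YQ_def ZQ_def using Y Z Q by auto
  have Yent: "Y $$ (i,j) = (\<Sum>k<n. YQ $$ (i,k) * Q $$ (j,k))" if "i < n" "j < n" for i j
  proof -
    have "Y = YQ * Q\<^sup>T" unfolding YQ_def using Y Q by simp
    hence "Y $$ (i,j) = (YQ * Q\<^sup>T) $$ (i,j)" by simp
    also have "\<dots> = (\<Sum>k<n. YQ $$ (i,k) * Q\<^sup>T $$ (k,j))" using that YQc Q by (intro mult_entry) auto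
    finally show ?thesis using that Q by simp
  qed
  have ZQent: "ZQ $$ (i,k) = (\<Sum>j<n. Z $$ (i,j) * Q $$ (j,k))" if "i < n" "k < n" for i k
    unfolding ZQ_def using that Z Q by (intro mult_entry) auto
  have "(\<Sum>i<n. \<Sum>j<n. Z $$ (i,j) * Y $$ (i,j)) = (\<Sum>i<n. \<Sum>j<n. \<Sum>k<n. Z $$ (i,j) * (YQ $$ (i,k) * Q $$ (j,k)))"
    by (intro sum.cong refl) (simp add: Yent sum_distrib_left)
  also have "\<dots> = (\<Sum>i<n. \<Sum>k<n. \<Sum>j<n. Z $$ (i,j) * (YQ $$ (i,k) * Q $$ (j,k)))"
    by (rule sum.cong[OF refl], rule sum.swap)
  also have "\<dots> = (\<Sum>i<n. \<Sum>k<n. YQ $$ (i,k) * ZQ $$ (i,k))"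
    by (intro sum.cong refl) (simp add: ZQent sum_distrib_left mult.commute mult.left_commute)
  also have "\<dots> = (\<Sum>k<n. \<Sum>i<n. YQ $$ (i,k) * ZQ $$ (i,k))" by (rule sum.swap)
  also have "\<dots> \<le> (\<Sum>k<n. d k)"
  proof (rule sum_mono)
    fix k assume "k \<in> {..<n}" hence k: "k < n" by simp
    show "(\<Sum>i<n. YQ $$ (i,k) * ZQ $$ (i,k)) \<le> d k"
    proof (rule cs_aux)
      show "0 \<le> d k" using Q(4) k by simp
      have "(\<Sum>i<n. YQ $$ (i,k) * YQ $$ (i,k)) = (YQ\<^sup>T * YQ) $$ (k,k)"
        using k YQc by (subst mult_entry[of _ n n _ n]) auto
      thus "(\<Sum>i<n. YQ $$ (i,k) * YQ $$ (i,k)) = d k * d k" using Q(5) k unfolding YQ_def by simp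
      define q where "q = col Q k"
      have qc: "q \<in> carrier_vec n" unfolding q_def using Q k by simp
      have Zq: "Z *\<^sub>v q = col ZQ k" unfolding ZQ_def q_def using Z Q k by (intro col_mult2[symmetric]) auto
      have "(\<Sum>i<n. ZQ $$ (i,k) * ZQ $$ (i,k)) = (Z *\<^sub>v q) \<bullet> (Z *\<^sub>v q)"
        unfolding Zq using YQc k by (subst sprod_sum[of _ n]) auto
      also have "\<dots> \<le> q \<bullet> q" using contr qc by simp
      also have "q \<bullet> q = (Q\<^sup>T * Q) $$ (k,k)" unfolding q_def using Q(1) k by simp
      also have "\<dots> = 1" using Q(2) k by simp
      finally show "(\<Sum>i<n. ZQ $$ (i,k) * ZQ $$ (i,k)) \<le> 1" .
    qed
  qed
  finally show ?thesis using Q(6) by simp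
qed

lemma contr_spec:
  fixes W :: "real mat"
  assumes W: "W \<in> carrier_mat n n" and sn: "spec_norm W \<le> 1"
  shows "\<forall>x\<in>carrier_vec n. (W *\<^sub>v x) \<bullet> (W *\<^sub>v x) \<le> x \<bullet> x"
proof
  define S where "S = {vnorm2 (W *\<^sub>v v) | v. v \<in> carrier_vec (dim_col W) \<and> vnorm2 v \<le> 1}"
  define R where "R = (\<Sum>i<n. \<Sum>j<n. \<bar>W $$ (i,j)\<bar>)"
  have bdd: "bdd_above S"
  proof (rule bdd_aboveI)
    fix y assume "y \<in> S"
    then obtain v where v: "v \<in> carrier_vec n" "vnorm2 v \<le> 1" "y = vnorm2 (W *\<^sub>v v)"
      unfolding S_def using W by auto
    have vv: "v \<bullet> v \<le> 1" using v(2) real_vv_ge0[of v] unfolding vnorm2_def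
      by (metis real_sqrt_le_1_iff)
    have vj: "\<bar>v $ j\<bar> \<le> 1" if "j < n" for j
    proof -
      have "v $ j * v $ j \<le> (\<Sum>l<n. v $ l * v $ l)" using that by (intro member_le_sum) auto
      also have "\<dots> \<le> 1" using vv sprod_sum[OF v(1) v(1)] by simp
      finally have "(v $ j)\<^sup>2 \<le> 1" by (simp add: power2_eq_square)
      thus ?thesis using abs_square_le_1 by blast
    qed
    have Wvi: "\<bar>(W *\<^sub>v v) $ i\<bar> \<le> R" if i: "i < n" for i
    proof -
      have "\<bar>(W *\<^sub>v v) $ i\<bar> = \<bar>\<Sum>j<n. W $$ (i,j) * v $ j\<bar>" using i by (simp add: mult_vec_entry[OF W v(1)])
      also have "\<dots> \<le> (\<Sum>j<n. \<bar>W $$ (i,j) * v $ j\<bar>)" by (rule sum_abs)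
      also have "\<dots> \<le> (\<Sum>j<n. \<bar>W $$ (i,j)\<bar>)"
        using vj by (intro sum_mono) (auto simp: abs_mult intro: mult_left_le)
      also have "\<dots> \<le> R" unfolding R_def using i
        by (intro member_le_sum[where f = "\<lambda>i. \<Sum>j<n. \<bar>W $$ (i,j)\<bar>"]) (auto intro: sum_nonneg)
      finally show ?thesis .
    qed
    have "(W *\<^sub>v v) \<bullet> (W *\<^sub>v v) = (\<Sum>i<n. (W *\<^sub>v v) $ i * (W *\<^sub>v v) $ i)"
      using W v by (intro sprod_sum) auto
    also have "\<dots> \<le> (\<Sum>i<n. R * R)"
    proof (intro sum_mono)
      fix i assume "i \<in> {..<n}"
      hence "\<bar>(W *\<^sub>v v) $ i\<bar> * \<bar>(W *\<^sub>v v) $ i\<bar> \<le> R * R" using Wvi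
        by (intro mult_mono) (auto intro: order_trans[OF abs_ge_zero])
      thus "(W *\<^sub>v v) $ i * (W *\<^sub>v v) $ i \<le> R * R" by (simp add: abs_mult[symmetric])
    qed
    finally have "(W *\<^sub>v v) \<bullet> (W *\<^sub>v v) \<le> real n * (R * R)" by simp
    thus "y \<le> sqrt (real n * (R * R))" unfolding v(3) vnorm2_def by simp
  qed
  fix x :: "real vec" assume x: "x \<in> carrier_vec n"
  show "(W *\<^sub>v x) \<bullet> (W *\<^sub>v x) \<le> x \<bullet> x"
  proof (cases "x \<bullet> x = 0")
    case True
    hence x0: "x = 0\<^sub>v n" using real_vv_0[OF x] by simp
    have "W *\<^sub>v x = 0\<^sub>v n" unfolding x0 using W by (intro eq_vecI) (auto simp: mult_vec_entry[OF W])
    thus ?thesis using W real_vv_ge0[of x] by simp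
  next
    case False
    hence xx: "0 < x \<bullet> x" using real_vv_ge0[of x] by simp
    define s where "s = sqrt (x \<bullet> x)"
    have s0: "0 < s" unfolding s_def using xx by simp
    have ss: "s * s = x \<bullet> x" unfolding s_def using xx by simp
    define v where "v = (1 / s) \<cdot>\<^sub>v x"
    have vc: "v \<in> carrier_vec n" unfolding v_def using x by simp
    have "v \<bullet> v = (1/s) * (1/s) * (x \<bullet> x)" unfolding v_def using x
      by (simp add: scalar_prod_smult_right)
    also have "\<dots> = 1" using s0 ss xx by (simp add: field_simps)
    finally have "vnorm2 v = 1" unfolding vnorm2_def by simp
    hence "vnorm2 (W *\<^sub>v v) \<in> S" unfolding S_def using vc W by auto
    hence "vnorm2 (W *\<^sub>v v) \<le> 1" using cSup_upper[OF _ bdd] sn unfolding spec_norm_def S_def by force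
    hence "(W *\<^sub>v v) \<bullet> (W *\<^sub>v v) \<le> 1" unfolding vnorm2_def by simp
    moreover have "(W *\<^sub>v v) \<bullet> (W *\<^sub>v v) = (1/s) * (1/s) * ((W *\<^sub>v x) \<bullet> (W *\<^sub>v x))"
      unfolding v_def using W x by (simp add: mult_mat_vec scalar_prod_smult_right)
    ultimately have "(W *\<^sub>v x) \<bullet> (W *\<^sub>v x) \<le> s * s" using s0 by (simp add: field_simps)
    thus ?thesis using ss by simp
  qed
qed


lemmas dist_n = add_scalar_prod_distrib[of _ N] scalar_prod_add_distrib[of _ N]
  minus_scalar_prod_distrib[of _ N] scalar_prod_minus_distrib[of _ N] for N

lemma proj_sprod:
  fixes P :: "real mat"
  assumes P: "P \<in> carrier_mat n n" and PT: "P\<^sup>T = P" and PP: "P * P = P"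
    and u: "u \<in> carrier_vec n" and v: "v \<in> carrier_vec n"
  shows "(P *\<^sub>v u) \<bullet> (P *\<^sub>v v) = u \<bullet> (P *\<^sub>v v)"
proof -
  have "(P *\<^sub>v u) \<bullet> (P *\<^sub>v v) = (P\<^sup>T *\<^sub>v u) \<bullet> (P *\<^sub>v v)" using PT by simp
  also have "\<dots> = u \<bullet> (P *\<^sub>v (P *\<^sub>v v))" using P u v by (intro transpose_vec_mult_scalar) auto
  also have "P *\<^sub>v (P *\<^sub>v v) = (P * P) *\<^sub>v v" using P v by (intro assoc_mult_mat_vec[symmetric]) auto
  finally show ?thesis unfolding PP .
qed

lemma Z_contr:
  fixes P W :: "real mat"
  assumes P: "P \<in> carrier_mat n n" and PT: "P\<^sup>T = P" and PP: "P * P = P"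
    and W: "W \<in> carrier_mat n n" and Wc: "\<forall>x\<in>carrier_vec n. (W *\<^sub>v x) \<bullet> (W *\<^sub>v x) \<le> x \<bullet> x"
  shows "\<forall>x\<in>carrier_vec n. ((P + W - (P * W + W * P - P * W * P)) *\<^sub>v x) \<bullet> ((P + W - (P * W + W * P - P * W * P)) *\<^sub>v x) \<le> x \<bullet> x"
proof
  fix x :: "real vec" assume x: "x \<in> carrier_vec n"
  define a where "a = P *\<^sub>v x"
  define y where "y = x - a"
  define wy where "wy = W *\<^sub>v y"
  define z where "z = wy - P *\<^sub>v wy"
  have c: "a \<in> carrier_vec n" "y \<in> carrier_vec n" "wy \<in> carrier_vec n" "z \<in> carrier_vec n"
    "P *\<^sub>v wy \<in> carrier_vec n"
    unfolding a_def y_def wy_def z_def using P W x by auto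
  have Zx: "(P + W - (P * W + W * P - P * W * P)) *\<^sub>v x = a + z"
  proof -
    have "(P + W - (P * W + W * P - P * W * P)) *\<^sub>v x
      = (P *\<^sub>v x + W *\<^sub>v x) - ((P *\<^sub>v (W *\<^sub>v x) + W *\<^sub>v (P *\<^sub>v x)) - P *\<^sub>v (W *\<^sub>v (P *\<^sub>v x)))"
    proof -
      have cs: "P * W \<in> carrier_mat n n" "W * P \<in> carrier_mat n n" "P * W * P \<in> carrier_mat n n"
        "P * W + W * P \<in> carrier_mat n n" "P * W + W * P - P * W * P \<in> carrier_mat n n"
        "P + W \<in> carrier_mat n n" using P W by auto
      have s1: "(P + W - (P * W + W * P - P * W * P)) *\<^sub>v x = (P + W) *\<^sub>v x - (P * W + W * P - P * W * P) *\<^sub>v x"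
        by (rule minus_mult_distrib_mat_vec[OF cs(6) cs(5) x])
      have s2: "(P + W) *\<^sub>v x = P *\<^sub>v x + W *\<^sub>v x" by (rule add_mult_distrib_mat_vec[OF P W x])
      have s3: "(P * W + W * P - P * W * P) *\<^sub>v x = (P * W + W * P) *\<^sub>v x - (P * W * P) *\<^sub>v x"
        by (rule minus_mult_distrib_mat_vec[OF cs(4) cs(3) x])
      have s4: "(P * W + W * P) *\<^sub>v x = (P * W) *\<^sub>v x + (W * P) *\<^sub>v x"
        by (rule add_mult_distrib_mat_vec[OF cs(1) cs(2) x])
      have s5: "(P * W) *\<^sub>v x = P *\<^sub>v (W *\<^sub>v x)" by (rule assoc_mult_mat_vec[OF P W x])
      have s6: "(W * P) *\<^sub>v x = W *\<^sub>v (P *\<^sub>v x)" by (rule assoc_mult_mat_vec[OF W P x])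
      have s7: "(P * W * P) *\<^sub>v x = (P * W) *\<^sub>v (P *\<^sub>v x)" by (rule assoc_mult_mat_vec[OF cs(1) P x])
      have s8: "(P * W) *\<^sub>v (P *\<^sub>v x) = P *\<^sub>v (W *\<^sub>v (P *\<^sub>v x))" using P W x by (intro assoc_mult_mat_vec) auto
      show ?thesis unfolding s1 s2 s3 s4 s5 s6 s7 s8 ..
    qed
    also have "\<dots> = a + z" unfolding z_def wy_def y_def a_def
      using P W x by (intro eq_vecI) (auto simp: mult_minus_distrib_mat_vec[of _ n n])
    finally show ?thesis .
  qed
  have az: "a \<bullet> z = 0"
  proof -
    have "a \<bullet> (P *\<^sub>v wy) = (P *\<^sub>v x) \<bullet> wy"
    proof -
      have "(P\<^sup>T *\<^sub>v x) \<bullet> wy = x \<bullet> (P *\<^sub>v wy)" using P x c by (intro transpose_vec_mult_scalar) auto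
      thus ?thesis unfolding a_def proj_sprod[OF P PT PP x c(3)] PT by simp
    qed
    thus ?thesis unfolding z_def using c by (simp add: dist_n[where N=n] a_def)
  qed
  have zz: "z \<bullet> z = wy \<bullet> wy - (P *\<^sub>v wy) \<bullet> (P *\<^sub>v wy)"
  proof -
    have e1: "(P *\<^sub>v wy) \<bullet> (P *\<^sub>v wy) = wy \<bullet> (P *\<^sub>v wy)" by (rule proj_sprod[OF P PT PP c(3) c(3)])
    have e2: "(P *\<^sub>v wy) \<bullet> wy = wy \<bullet> (P *\<^sub>v wy)" using c by (intro comm_scalar_prod) auto
    show ?thesis unfolding z_def using c e1 e2 by (simp add: dist_n[where N=n])
  qed
  have yy: "y \<bullet> y = x \<bullet> x - a \<bullet> a"
  proof -
    have e1: "a \<bullet> a = x \<bullet> a" unfolding a_def by (rule proj_sprod[OF P PT PP x x])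
    have e2: "a \<bullet> x = x \<bullet> a" using c x by (intro comm_scalar_prod) auto
    show ?thesis unfolding y_def using c x e1 e2 by (simp add: dist_n[where N=n])
  qed
  have "(a + z) \<bullet> (a + z) = a \<bullet> a + 2 * (a \<bullet> z) + z \<bullet> z"
  proof -
    have "z \<bullet> a = a \<bullet> z" using c by (intro comm_scalar_prod) auto
    thus ?thesis using c by (simp add: dist_n[where N=n])
  qed
  also have "\<dots> \<le> a \<bullet> a + wy \<bullet> wy" unfolding az zz using real_vv_ge0[of "P *\<^sub>v wy"] by simp
  also have "\<dots> \<le> a \<bullet> a + y \<bullet> y" using Wc c unfolding wy_def by auto
  also have "\<dots> = x \<bullet> x" unfolding yy by simp
  finally show "((P + W - (P * W + W * P - P * W * P)) *\<^sub>v x) \<bullet> ((P + W - (P * W + W * P - P * W * P)) *\<^sub>v x) \<le> x \<bullet> x"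
    unfolding Zx .
qed

definition ip :: "nat \<Rightarrow> real mat \<Rightarrow> real mat \<Rightarrow> real" where
  "ip n X Y = (\<Sum>i<n. \<Sum>j<n. X $$ (i,j) * Y $$ (i,j))"

lemma ip_mult_left:
  assumes A: "A \<in> carrier_mat n n" and B: "B \<in> carrier_mat n n" and C: "C \<in> carrier_mat n n"
  shows "ip n (A * B) C = ip n B (A\<^sup>T * C)"
proof -
  have "ip n (A * B) C = (\<Sum>i<n. \<Sum>j<n. \<Sum>k<n. A $$ (i,k) * B $$ (k,j) * C $$ (i,j))"
    unfolding ip_def using A B by (intro sum.cong refl) (simp add: mult_entry[OF A B] sum_distrib_right del: index_mult_mat)
  also have "\<dots> = (\<Sum>j<n. \<Sum>i<n. \<Sum>k<n. A $$ (i,k) * B $$ (k,j) * C $$ (i,j))" by (rule sum.swap)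
  also have "\<dots> = (\<Sum>j<n. \<Sum>k<n. \<Sum>i<n. A $$ (i,k) * B $$ (k,j) * C $$ (i,j))"
    by (rule sum.cong[OF refl], rule sum.swap)
  also have "\<dots> = (\<Sum>k<n. \<Sum>j<n. \<Sum>i<n. A $$ (i,k) * B $$ (k,j) * C $$ (i,j))" by (rule sum.swap)
  also have "\<dots> = ip n B (A\<^sup>T * C)"
    unfolding ip_def
  proof (rule sum.cong[OF refl], rule sum.cong[OF refl])
    fix k j assume "k \<in> {..<n}" "j \<in> {..<n}"
    hence kj: "k < n" "j < n" by auto
    have "(A\<^sup>T * C) $$ (k,j) = (\<Sum>i<n. A\<^sup>T $$ (k,i) * C $$ (i,j))" using A C kj by (intro mult_entry) auto
    also have "\<dots> = (\<Sum>i<n. A $$ (i,k) * C $$ (i,j))" using A kj by (intro sum.cong) auto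
    finally have eq: "(A\<^sup>T * C) $$ (k,j) = (\<Sum>i<n. A $$ (i,k) * C $$ (i,j))" .
    show "(\<Sum>i<n. A $$ (i,k) * B $$ (k,j) * C $$ (i,j)) = B $$ (k,j) * (A\<^sup>T * C) $$ (k,j)"
      unfolding eq sum_distrib_left by (rule sum.cong) (auto simp: ac_simps)
  qed
  finally show ?thesis .
qed

lemma ip_mult_right:
  assumes A: "A \<in> carrier_mat n n" and B: "B \<in> carrier_mat n n" and C: "C \<in> carrier_mat n n"
  shows "ip n (A * B) C = ip n A (C * B\<^sup>T)"
proof -
  have "ip n (A * B) C = (\<Sum>i<n. \<Sum>j<n. \<Sum>k<n. A $$ (i,k) * B $$ (k,j) * C $$ (i,j))"
    unfolding ip_def using A B by (intro sum.cong refl) (simp add: mult_entry[OF A B] sum_distrib_right del: index_mult_mat)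
  also have "\<dots> = (\<Sum>i<n. \<Sum>k<n. \<Sum>j<n. A $$ (i,k) * B $$ (k,j) * C $$ (i,j))"
    by (rule sum.cong[OF refl], rule sum.swap)
  also have "\<dots> = ip n A (C * B\<^sup>T)"
    unfolding ip_def
  proof (rule sum.cong[OF refl], rule sum.cong[OF refl])
    fix i k assume "i \<in> {..<n}" "k \<in> {..<n}"
    hence ik: "i < n" "k < n" by auto
    have "(C * B\<^sup>T) $$ (i,k) = (\<Sum>j<n. C $$ (i,j) * B\<^sup>T $$ (j,k))" using B C ik by (intro mult_entry) auto
    also have "\<dots> = (\<Sum>j<n. C $$ (i,j) * B $$ (k,j))" using B ik by (intro sum.cong) auto
    finally have eq: "(C * B\<^sup>T) $$ (i,k) = (\<Sum>j<n. C $$ (i,j) * B $$ (k,j))" .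
    show "(\<Sum>j<n. A $$ (i,k) * B $$ (k,j) * C $$ (i,j)) = A $$ (i,k) * (C * B\<^sup>T) $$ (i,k)"
      unfolding eq sum_distrib_left by (rule sum.cong) (auto simp: ac_simps)
  qed
  finally show ?thesis .
qed

lemma ip_add:
  assumes "A \<in> carrier_mat n n" "B \<in> carrier_mat n n"
  shows "ip n (A + B) C = ip n A C + ip n B C"
proof -
  have "(\<Sum>j<n. (A + B) $$ (i,j) * C $$ (i,j)) = (\<Sum>j<n. A $$ (i,j) * C $$ (i,j)) + (\<Sum>j<n. B $$ (i,j) * C $$ (i,j))"
    if "i < n" for i
    unfolding sum.distrib[symmetric] using assms that by (intro sum.cong refl) (simp add: distrib_right)
  thus ?thesis unfolding ip_def sum.distrib[symmetric] by (rule sum.cong[OF refl]) simp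
qed

lemma ip_minus:
  assumes "A \<in> carrier_mat n n" "B \<in> carrier_mat n n"
  shows "ip n (A - B) C = ip n A C - ip n B C"
proof -
  have "(\<Sum>j<n. (A - B) $$ (i,j) * C $$ (i,j)) = (\<Sum>j<n. A $$ (i,j) * C $$ (i,j)) - (\<Sum>j<n. B $$ (i,j) * C $$ (i,j))"
    if "i < n" for i
    unfolding sum_subtractf[symmetric] using assms that by (intro sum.cong refl) (simp add: left_diff_distrib)
  thus ?thesis unfolding ip_def sum_subtractf[symmetric] by (rule sum.cong[OF refl]) simp
qed

lemma sum_set_pairs:
  fixes f :: "nat \<Rightarrow> nat \<Rightarrow> real"
  shows "(\<Sum>(i,j)\<in>{(i,j). i<n \<and> j<n \<and> Q i j}. f i j) = (\<Sum>i<n. \<Sum>j<n. if Q i j then f i j else 0)"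
proof -
  have set: "{(i,j). i<n \<and> j<n \<and> Q i j} = {p \<in> {..<n} \<times> {..<n}. Q (fst p) (snd p)}" by auto
  have fin: "finite ({..<n} \<times> {..<n})" by simp
  have "(\<Sum>p\<in>{p \<in> {..<n} \<times> {..<n}. Q (fst p) (snd p)}. (\<lambda>(i,j). f i j) p)
      = (\<Sum>p\<in>{..<n} \<times> {..<n}. if Q (fst p) (snd p) then (\<lambda>(i,j). f i j) p else 0)"
    by (rule sum.inter_filter[OF fin])
  also have "\<dots> = (\<Sum>(i,j)\<in>{..<n} \<times> {..<n}. if Q i j then f i j else 0)"
    by (rule sum.cong) auto
  also have "\<dots> = (\<Sum>i<n. \<Sum>j<n. if Q i j then f i j else 0)"
    by (rule sum.cartesian_product[symmetric])
  finally show ?thesis unfolding set .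
qed

lemma max_abs_entry_ge:
  assumes "i < dim_row M" "j < dim_col M"
  shows "\<bar>M $$ (i,j)\<bar> \<le> max_abs_entry M"
proof -
  have "{\<bar>M $$ (i,j)\<bar> | i j. i < dim_row M \<and> j < dim_col M} \<subseteq> (\<lambda>p. \<bar>M $$ p\<bar>) ` ({..<dim_row M} \<times> {..<dim_col M})"
    by blast
  hence "finite {\<bar>M $$ (i,j)\<bar> | i j. i < dim_row M \<and> j < dim_col M}"
    by (rule finite_subset) simp
  hence fin: "finite (insert 0 {\<bar>M $$ (i,j)\<bar> | i j. i < dim_row M \<and> j < dim_col M})" by (rule finite.insertI)
  have "\<bar>M $$ (i,j)\<bar> \<in> {\<bar>M $$ (i,j)\<bar> | i j. i < dim_row M \<and> j < dim_col M}" using assms by blast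
  thus ?thesis unfolding max_abs_entry_def by (rule Max_ge[OF fin, OF insertI2])
qed

lemma cluster_facts:
  fixes Ystar U0 S0 :: "real mat"
  assumes Ystar: "is_cluster_matrix n V1 Cl Ystar" and decomp: "compact_decomp Ystar r U0 S0"
  shows "U0 * U0\<^sup>T \<in> carrier_mat n n" "(U0 * U0\<^sup>T)\<^sup>T = U0 * U0\<^sup>T"
    "(U0 * U0\<^sup>T) * (U0 * U0\<^sup>T) = U0 * U0\<^sup>T"
    "Ystar \<in> carrier_mat n n"
    "\<forall>i<n. \<forall>j<n. Ystar $$ (i,j) = 0 \<or> Ystar $$ (i,j) = 1"
    "nuclear_norm Ystar = ip n (U0 * U0\<^sup>T) Ystar"
    "\<forall>i<n. \<forall>j<n. Ystar $$ (i,j) = 0 \<longrightarrow> (U0 * U0\<^sup>T) $$ (i,j) = 0"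
    "(U0 * U0\<^sup>T) * Ystar = Ystar" "Ystar * (U0 * U0\<^sup>T) = Ystar"
proof -
  define P where "P = U0 * U0\<^sup>T"
  have Yc: "Ystar \<in> carrier_mat n n" and V1: "V1 \<subseteq> {0..<n}" and part: "partition_on V1 Cl"
    and Yent: "\<And>i j. i < n \<Longrightarrow> j < n \<Longrightarrow> Ystar $$ (i,j) = (if \<exists>C\<in>Cl. i \<in> C \<and> j \<in> C then 1 else 0)"
    using Ystar unfolding is_cluster_matrix_def by auto
  show "Ystar \<in> carrier_mat n n" by (rule Yc)
  show "\<forall>i<n. \<forall>j<n. Ystar $$ (i,j) = 0 \<or> Ystar $$ (i,j) = 1" using Yent by simp
  have U0: "U0 \<in> carrier_mat n r" and S0: "S0 \<in> carrier_mat r r" and UU: "U0\<^sup>T * U0 = 1\<^sub>m r"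
    and S0d: "diagonal_mat S0" and S0p: "\<forall>k<r. S0 $$ (k,k) > 0" and Yd: "Ystar = U0 * S0 * U0\<^sup>T"
    using decomp Yc unfolding compact_decomp_def by auto
  have Pc: "P \<in> carrier_mat n n" unfolding P_def using U0 by simp
  show "U0 * U0\<^sup>T \<in> carrier_mat n n" using Pc unfolding P_def .
  have PT: "P\<^sup>T = P" unfolding P_def using U0 by (simp add: transpose_mult[of U0 n r "U0\<^sup>T" n])
  show "(U0 * U0\<^sup>T)\<^sup>T = U0 * U0\<^sup>T" using PT unfolding P_def .
  have UTc: "U0\<^sup>T \<in> carrier_mat r n" using U0 by simp
  have PP: "P * P = P"
  proof -
    have "P * P = U0 * (U0\<^sup>T * (U0 * U0\<^sup>T))" unfolding P_def using U0 UTc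
      by (simp add: assoc_mult_mat[of U0 n r "U0\<^sup>T" n "U0 * U0\<^sup>T" n])
    also have "U0\<^sup>T * (U0 * U0\<^sup>T) = (U0\<^sup>T * U0) * U0\<^sup>T"
      using U0 UTc by (simp add: assoc_mult_mat[of "U0\<^sup>T" r n U0 r "U0\<^sup>T" n])
    finally show ?thesis unfolding UU P_def using UTc by simp
  qed
  show "(U0 * U0\<^sup>T) * (U0 * U0\<^sup>T) = U0 * U0\<^sup>T" using PP unfolding P_def .
  define s where "s k = S0 $$ (k,k)" for k
  have S0Dg: "S0 = Dg r s" using S0 S0d unfolding Dg_def s_def diagonal_mat_def by (intro eq_matI) auto
  have PY: "P * Ystar = Ystar"
  proof -
    have "P * Ystar = U0 * (U0\<^sup>T * (U0 * (S0 * U0\<^sup>T)))" unfolding P_def Yd using U0 UTc S0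
      by (simp add: assoc_mult_mat[of U0 n r "U0\<^sup>T" n "U0 * S0 * U0\<^sup>T" n]
         assoc_mult_mat[of U0 n r S0 r "U0\<^sup>T" n] assoc_mult_mat[of U0 n r "U0\<^sup>T" n "U0 * (S0 * U0\<^sup>T)" n])
    also have "U0\<^sup>T * (U0 * (S0 * U0\<^sup>T)) = (U0\<^sup>T * U0) * (S0 * U0\<^sup>T)"
      using U0 UTc S0 by (simp add: assoc_mult_mat[of "U0\<^sup>T" r n U0 r "S0 * U0\<^sup>T" n])
    also have "\<dots> = S0 * U0\<^sup>T" unfolding UU using S0 UTc by simp
    finally show ?thesis unfolding Yd using U0 UTc S0 by (simp add: assoc_mult_mat[of U0 n r S0 r "U0\<^sup>T" n])
  qed
  show "(U0 * U0\<^sup>T) * Ystar = Ystar" using PY unfolding P_def .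
  have YT: "Ystar\<^sup>T = Ystar"
    using Yc by (intro eq_matI) (auto simp: Yent)
  have YP: "Ystar * P = Ystar"
  proof -
    have "(P * Ystar)\<^sup>T = Ystar\<^sup>T * P\<^sup>T" using Pc Yc by (intro transpose_mult) auto
    thus ?thesis unfolding PY YT PT by simp
  qed
  show "Ystar * (U0 * U0\<^sup>T) = Ystar" using YP unfolding P_def .
  have Ypsd: "psd_mat Ystar" unfolding psd_mat_def
  proof (intro conjI ballI)
    show "Ystar \<in> carrier_mat (dim_row Ystar) (dim_row Ystar)" using Yc by simp
    show "Ystar\<^sup>T = Ystar" by (rule YT)
    fix v :: "real vec" assume "v \<in> carrier_vec (dim_row Ystar)"
    hence v: "v \<in> carrier_vec n" using Yc by simp
    define w where "w = U0\<^sup>T *\<^sub>v v"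
    have wc: "w \<in> carrier_vec r" unfolding w_def using U0 v by simp
    have "Ystar *\<^sub>v v = (U0 * S0) *\<^sub>v w" unfolding Yd w_def using U0 S0 UTc v
      by (intro assoc_mult_mat_vec[of "U0 * S0" n r "U0\<^sup>T" n v]) auto
    also have "\<dots> = U0 *\<^sub>v (S0 *\<^sub>v w)" using U0 S0 wc by (intro assoc_mult_mat_vec) auto
    finally have "Ystar *\<^sub>v v = U0 *\<^sub>v (S0 *\<^sub>v w)" .
    hence "v \<bullet> (Ystar *\<^sub>v v) = (U0\<^sup>T *\<^sub>v v) \<bullet> (S0 *\<^sub>v w)"
      using transpose_vec_mult_scalar[of U0 n r "S0 *\<^sub>v w" v] U0 S0 wc v by simp
    also have "\<dots> = (\<Sum>l<r. w $ l * (s l * w $ l))" unfolding w_def[symmetric] S0Dg Dg_mult_vec[OF wc]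
      using wc by (subst sprod_sum[of _ r]) auto
    also have "\<dots> = (\<Sum>l<r. s l * (w $ l * w $ l))" by (simp add: algebra_simps)
    also have "\<dots> \<ge> 0" using S0p unfolding s_def by (intro sum_nonneg) (auto intro: mult_nonneg_nonneg less_imp_le)
    finally show "0 \<le> v \<bullet> (Ystar *\<^sub>v v)" .
  qed
  have nn: "nuclear_norm Ystar = mtrace Ystar"
    using nuclear_facts[OF Yc] Ypsd Yc YT by auto
  have "ip n P Ystar = (\<Sum>i<n. \<Sum>j<n. P $$ (i,j) * Ystar $$ (j,i))"
    unfolding ip_def
  proof (rule sum.cong[OF refl], rule sum.cong[OF refl])
    fix i j assume "i \<in> {..<n}" "j \<in> {..<n}"
    hence ij: "i < n" "j < n" by auto
    have "Ystar $$ (j,i) = Ystar $$ (i,j)" unfolding Yent[OF ij] Yent[OF ij(2) ij(1)] by (simp add: conj_commute)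
    thus "P $$ (i,j) * Ystar $$ (i,j) = P $$ (i,j) * Ystar $$ (j,i)" by simp
  qed
  also have "\<dots> = (\<Sum>i<n. (P * Ystar) $$ (i,i))"
    using Pc Yc by (intro sum.cong refl) (simp add: mult_entry[OF Pc Yc] del: index_mult_mat)
  also have "\<dots> = mtrace Ystar" unfolding PY mtrace_def using Yc by simp
  finally show "nuclear_norm Ystar = ip n (U0 * U0\<^sup>T) Ystar" unfolding nn P_def ..
  define X where "X = U0 * Dg r (\<lambda>k. 1 / s k) * U0\<^sup>T"
  have "U0 * Dg r (\<lambda>k. 1 / s k) \<in> carrier_mat n r" using U0 by (intro mult_carrier_mat[of _ n r]) auto
  hence Xc: "X \<in> carrier_mat n n" unfolding X_def using UTc by (intro mult_carrier_mat[of _ n r]) auto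
  have XY: "X * Ystar = P"
  proof -
    have DD: "Dg r (\<lambda>k. 1 / s k) * S0 = 1\<^sub>m r" unfolding S0Dg Dg_mult_Dg using S0p unfolding s_def
      by (intro eq_matI) (auto simp: Dg_def)
    define G where "G = Dg r (\<lambda>k. 1 / s k)"
    have Gc: "G \<in> carrier_mat r r" unfolding G_def by simp
    have e1: "U0\<^sup>T * (U0 * S0 * U0\<^sup>T) = S0 * U0\<^sup>T"
    proof -
      have "U0\<^sup>T * (U0 * S0 * U0\<^sup>T) = (U0\<^sup>T * (U0 * S0)) * U0\<^sup>T"
        using U0 S0 UTc by (intro assoc_mult_mat[symmetric]) auto
      also have "U0\<^sup>T * (U0 * S0) = (U0\<^sup>T * U0) * S0" using U0 S0 UTc by (intro assoc_mult_mat[symmetric]) auto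
      finally show ?thesis unfolding UU using S0 by simp
    qed
    have "X * Ystar = (U0 * G) * (U0\<^sup>T * (U0 * S0 * U0\<^sup>T))"
      unfolding X_def Yd G_def[symmetric] using U0 UTc S0 Gc by (intro assoc_mult_mat) auto
    also have "\<dots> = U0 * (G * (S0 * U0\<^sup>T))" unfolding e1 using U0 UTc S0 Gc by (intro assoc_mult_mat) auto
    also have "G * (S0 * U0\<^sup>T) = (G * S0) * U0\<^sup>T" using UTc S0 Gc by (intro assoc_mult_mat[symmetric]) auto
    finally have "X * Ystar = U0 * ((Dg r (\<lambda>k. 1 / s k) * S0) * U0\<^sup>T)" unfolding G_def .
    also have "\<dots> = P" unfolding DD P_def using UTc by simp
    finally show ?thesis .
  qed
  have Pent: "P $$ (i,j) = (\<Sum>k<n. X $$ (i,k) * Ystar $$ (k,j))" if "i < n" "j < n" for i j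
    unfolding XY[symmetric] using that Xc Yc by (intro mult_entry) auto
  show "\<forall>i<n. \<forall>j<n. Ystar $$ (i,j) = 0 \<longrightarrow> (U0 * U0\<^sup>T) $$ (i,j) = 0"
  proof (intro allI impI)
    fix i j assume i: "i < n" and j: "j < n" and Y0: "Ystar $$ (i,j) = 0"
    show "(U0 * U0\<^sup>T) $$ (i,j) = 0"
    proof (cases "\<exists>C\<in>Cl. j \<in> C")
      case False
      hence "Ystar $$ (k,j) = 0" if "k < n" for k using Yent[OF that j] by auto
      thus ?thesis unfolding P_def[symmetric] Pent[OF i j] by simp
    next
      case True
      then obtain C where C: "C \<in> Cl" "j \<in> C" by auto
      have CV: "C \<subseteq> {..<n}" using partition_onD1[OF part] C V1 by auto
      have uniq: "C' = C" if "C' \<in> Cl" "l \<in> C'" "l \<in> C" for C' l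
        using disjointD[OF partition_onD2[OF part] that(1) C(1)] that by auto
      have colC: "Ystar $$ (k,l) = (if k \<in> C then 1 else 0)" if "k < n" "l \<in> C" for k l
      proof -
        have l: "l < n" using CV that by auto
        show ?thesis unfolding Yent[OF that(1) l] using uniq that C by auto
      qed
      have Pl: "P $$ (i,l) = P $$ (i,j)" if "l \<in> C" for l
      proof -
        have l: "l < n" using CV that by auto
        show ?thesis unfolding Pent[OF i l] Pent[OF i j] using colC that C(2) by (intro sum.cong) auto
      qed
      have "Ystar $$ (i,j) = (P * Ystar) $$ (i,j)" unfolding PY ..
      also have "\<dots> = (\<Sum>k<n. P $$ (i,k) * Ystar $$ (k,j))" using Pc Yc i j by (intro mult_entry) auto
      also have "\<dots> = (\<Sum>k<n. if k \<in> C then P $$ (i,k) else 0)" using colC C(2) by (intro sum.cong) auto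
      also have "\<dots> = (\<Sum>k\<in>C. P $$ (i,k))" using CV by (simp add: sum.inter_restrict[symmetric] Int_absorb1)
      also have "\<dots> = (\<Sum>k\<in>C. P $$ (i,j))" using Pl by (intro sum.cong) auto
      also have "\<dots> = real (card C) * P $$ (i,j)" by simp
      finally have "real (card C) * P $$ (i,j) = 0" using Y0 by simp
      moreover have "card C > 0" using CV C(2) by (metis card_gt_0_iff empty_iff finite_lessThan finite_subset)
      ultimately show ?thesis unfolding P_def[symmetric] by simp
    qed
  qed
qed

lemma term_neg:
  fixes x d e :: real
  assumes "e \<le> x" "d \<le> 0" shows "x * d \<le> - e * \<bar>d\<bar>"
proof -
  have "x * d \<le> e * d" using assms by (intro mult_right_mono_neg) auto
  thus ?thesis using assms(2) by simp
qed

lemma term_pos: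
  fixes x d e :: real
  assumes "x \<le> - e" "0 \<le> d" shows "x * d \<le> - e * \<bar>d\<bar>"
proof -
  have "x * d \<le> (- e) * d" using assms by (intro mult_right_mono) auto
  thus ?thesis using assms(2) by simp
qed

theorem proposition1:
  fixes n r :: nat and A Ystar U0 S0 W :: "real mat" and t \<epsilon> :: real
    and V1 :: "nat set" and Cl :: "nat set set"
  assumes A_carrier: "A \<in> carrier_mat n n"
    and A_01: "\<forall>i<n. \<forall>j<n. A $$ (i,j) = 0 \<or> A $$ (i,j) = 1"
    and A_sym: "A\<^sup>T = A"
    and t: "0 < t" "t < 1"
    and Ystar: "is_cluster_matrix n V1 Cl Ystar"
    and decomp: "compact_decomp Ystar r U0 S0"
    and W_carrier: "W \<in> carrier_mat n n"
    and eps: "0 < \<epsilon>" "\<epsilon> < 1"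
    and cond_a: "spec_norm W \<le> 1"
    and cond_b: "max_abs_entry (P_T U0 W)
                   \<le> \<epsilon> / 2 * (1 / (48 * sqrt (real n))) * min (sqrt (t / (1 - t))) (sqrt ((1 - t) / t))"
    and cond_c1: "\<forall>i<n. \<forall>j<n. Ystar $$ (i,j) \<noteq> 0 \<and> A $$ (i,j) \<noteq> 1 \<longrightarrow>
                   - (1 + \<epsilon>) * (1 / (48 * sqrt (real n))) * sqrt (t / (1 - t))
                   - (U0 * U0\<^sup>T + W) $$ (i,j) = 0"
    and cond_c2: "\<forall>i<n. \<forall>j<n. Ystar $$ (i,j) = 0 \<and> A $$ (i,j) = 1 \<longrightarrow>
                   - (1 + \<epsilon>) * (1 / (48 * sqrt (real n))) * sqrt ((1 - t) / t) + W $$ (i,j) = 0"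
    and cond_c3: "\<forall>i<n. \<forall>j<n. Ystar $$ (i,j) \<noteq> 0 \<and> A $$ (i,j) = 1 \<longrightarrow>
                   (1 - \<epsilon>) * (1 / (48 * sqrt (real n))) * sqrt ((1 - t) / t)
                   - (U0 * U0\<^sup>T + W) $$ (i,j) \<ge> 0"
    and cond_c4: "\<forall>i<n. \<forall>j<n. Ystar $$ (i,j) = 0 \<and> A $$ (i,j) \<noteq> 1 \<longrightarrow>
                   (1 - \<epsilon>) * (1 / (48 * sqrt (real n))) * sqrt (t / (1 - t)) + W $$ (i,j) \<ge> 0"
  shows "feasible n Ystar \<and>
         (\<forall>Y. feasible n Y \<and> Y \<noteq> Ystar \<longrightarrow>
            objective n A (sqrt ((1 - t) / t)) (sqrt (t / (1 - t))) Y
            < objective n A (sqrt ((1 - t) / t)) (sqrt (t / (1 - t))) Ystar)"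
proof -
  note cf = cluster_facts[OF Ystar decomp]
  define P where "P = U0 * U0\<^sup>T"
  have Pc: "P \<in> carrier_mat n n" and PT: "P\<^sup>T = P" and PP: "P * P = P" and Yc: "Ystar \<in> carrier_mat n n"
    and Y01: "\<forall>i<n. \<forall>j<n. Ystar $$ (i,j) = 0 \<or> Ystar $$ (i,j) = 1"
    and nnYs: "nuclear_norm Ystar = ip n P Ystar"
    and P0: "\<forall>i<n. \<forall>j<n. Ystar $$ (i,j) = 0 \<longrightarrow> P $$ (i,j) = 0"
    and PY: "P * Ystar = Ystar" and YP: "Ystar * P = Ystar"
    using cf unfolding P_def by auto
  have feas: "feasible n Ystar" unfolding feasible_def using Yc Y01 by force
  show ?thesis
  proof (intro conjI allI impI feas)
    fix Y assume "feasible n Y \<and> Y \<noteq> Ystar"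
    hence Yc': "Y \<in> carrier_mat n n" and Y01': "\<forall>i<n. \<forall>j<n. 0 \<le> Y $$ (i,j) \<and> Y $$ (i,j) \<le> 1"
      and Yneq: "Y \<noteq> Ystar" unfolding feasible_def by auto
    obtain i0 j0 where ij0: "i0 < n" "j0 < n" "Y $$ (i0,j0) \<noteq> Ystar $$ (i0,j0)"
      using Yneq Yc Yc' by (metis carrier_matD eq_matI)
    hence n0: "0 < n" by simp
    define cA where "cA = sqrt ((1 - t) / t)"
    define cAc where "cAc = sqrt (t / (1 - t))"
    have cA0: "0 < cA" unfolding cA_def using t by simp
    have cAc0: "0 < cAc" unfolding cAc_def using t by simp
    define m where "m = min cAc cA"
    have m0: "0 < m" unfolding m_def using cA0 cAc0 by simp
    define K where "K = 48 * sqrt (real n)"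
    have K0: "0 < K" unfolding K_def using n0 by simp
    define lam where "lam = 1 / K"
    have lam0: "0 < lam" unfolding lam_def using K0 by simp
    define C where "C i j = (if A $$ (i,j) = 1 then cA else - cAc)" for i j
    define L where "L X = (\<Sum>i<n. \<Sum>j<n. C i j * X $$ (i,j))" for X
    have obj: "objective n A cA cAc X = L X - K * nuclear_norm X" for X
    proof -
      have "cA * (\<Sum>i<n. \<Sum>j<n. if A $$ (i,j) = 1 then X $$ (i,j) else 0)
          - cAc * (\<Sum>i<n. \<Sum>j<n. if A $$ (i,j) = 0 then X $$ (i,j) else 0) = L X"
        unfolding L_def sum_distrib_left sum_subtractf[symmetric]
      proof (rule sum.cong[OF refl], rule sum.cong[OF refl])
        fix i j assume "i \<in> {..<n}" "j \<in> {..<n}"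
        hence "A $$ (i,j) = 0 \<or> A $$ (i,j) = 1" using A_01 by auto
        thus "cA * (if A $$ (i,j) = 1 then X $$ (i,j) else 0) - cAc * (if A $$ (i,j) = 0 then X $$ (i,j) else 0)
          = C i j * X $$ (i,j)" unfolding C_def by auto
      qed
      thus ?thesis unfolding objective_def sum_set_pairs K_def by simp
    qed
    define T where "T = P * W + W * P - P * W * P"
    have PTW: "P_T U0 W = T" unfolding P_T_def T_def P_def Let_def ..
    define Z where "Z = P + W - T"
    have Tc: "T \<in> carrier_mat n n" unfolding T_def using Pc W_carrier by auto
    have Zc: "Z \<in> carrier_mat n n" unfolding Z_def using Pc W_carrier Tc by auto
    have Zcontr: "\<forall>x\<in>carrier_vec n. (Z *\<^sub>v x) \<bullet> (Z *\<^sub>v x) \<le> x \<bullet> x"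
      unfolding Z_def T_def by (rule Z_contr[OF Pc PT PP W_carrier contr_spec[OF W_carrier cond_a]])
    have nnY: "ip n Z Y \<le> nuclear_norm Y" unfolding ip_def by (rule nuc_ge[OF Yc' Zc Zcontr])
    have ipPW: "ip n (P * W) Ystar = ip n W Ystar"
      unfolding ip_mult_left[OF Pc W_carrier Yc] PT PY ..
    have ipWP: "ip n (W * P) Ystar = ip n W Ystar"
      unfolding ip_mult_right[OF W_carrier Pc Yc] PT YP ..
    have ipPWP: "ip n (P * W * P) Ystar = ip n W Ystar"
      using Pc W_carrier by (simp only: ip_mult_right[of "P * W" n P Ystar] PT YP ipPW mult_carrier_mat Yc)
    have ipZ: "ip n Z Ystar = ip n P Ystar"
    proof -
      have c1: "P * W \<in> carrier_mat n n" "W * P \<in> carrier_mat n n" "P * W * P \<in> carrier_mat n n"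
        "P * W + W * P \<in> carrier_mat n n" using Pc W_carrier by auto
      have "ip n T Ystar = ip n W Ystar" unfolding T_def ip_minus[OF c1(4) c1(3)] ip_add[OF c1(1) c1(2)]
        ipPW ipWP ipPWP by simp
      thus ?thesis unfolding Z_def using Pc W_carrier Tc by (simp add: ip_add ip_minus)
    qed
    have Tb: "\<bar>T $$ (i,j)\<bar> \<le> \<epsilon> / 2 * lam * m" if "i < n" "j < n" for i j
    proof -
      have "\<bar>T $$ (i,j)\<bar> \<le> max_abs_entry T" using Tc that by (intro max_abs_entry_ge) auto
      thus ?thesis using cond_b unfolding PTW lam_def K_def m_def cA_def cAc_def by simp
    qed
    define D where "D i j = Y $$ (i,j) - Ystar $$ (i,j)" for i j
    define e where "e = \<epsilon> * lam * m"
    have e0: "0 < e" unfolding e_def using eps lam0 m0 by simp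
    have termb: "lam * C i j * D i j - Z $$ (i,j) * D i j \<le> - (e / 2) * \<bar>D i j\<bar>" if ij: "i < n" "j < n" for i j
    proof -
      have Zij: "Z $$ (i,j) = P $$ (i,j) + W $$ (i,j) - T $$ (i,j)" unfolding Z_def using ij Pc W_carrier Tc by simp
      have PWij: "(U0 * U0\<^sup>T + W) $$ (i,j) = P $$ (i,j) + W $$ (i,j)" unfolding P_def[symmetric]
        using ij Pc W_carrier by simp
      have t2: "T $$ (i,j) * D i j \<le> (e / 2) * \<bar>D i j\<bar>"
      proof -
        have "T $$ (i,j) * D i j \<le> \<bar>T $$ (i,j)\<bar> * \<bar>D i j\<bar>" by (metis abs_ge_self abs_mult)
        also have "\<dots> \<le> (e / 2) * \<bar>D i j\<bar>" using Tb[OF ij] unfolding e_def by (intro mult_right_mono) auto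
        finally show ?thesis .
      qed
      have elm: "e \<le> \<epsilon> * lam * cA" "e \<le> \<epsilon> * lam * cAc" unfolding e_def m_def using eps lam0
        by (auto intro!: mult_left_mono)
      have t1: "(lam * C i j - P $$ (i,j) - W $$ (i,j)) * D i j \<le> - e * \<bar>D i j\<bar>"
      proof (cases "Ystar $$ (i,j) = 0")
        case Y0: True
        have Pz: "P $$ (i,j) = 0" using P0 ij Y0 by simp
        have Dp: "0 \<le> D i j" unfolding D_def using Y0 Y01' ij by simp
        show ?thesis
        proof (cases "A $$ (i,j) = 1")
          case True
          have h: "- (1 + \<epsilon>) * (1 / (48 * sqrt (real n))) * sqrt ((1 - t) / t) + W $$ (i,j) = 0"
            using cond_c2 ij Y0 True by blast
          have "W $$ (i,j) = (1 + \<epsilon>) * lam * cA" using h unfolding lam_def K_def cA_def by linarith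
          hence "lam * C i j - P $$ (i,j) - W $$ (i,j) = - (\<epsilon> * lam * cA)"
            unfolding C_def using True Pz by (simp add: algebra_simps)
          thus ?thesis using elm Dp by (intro term_pos) auto
        next
          case False
          have h: "(1 - \<epsilon>) * (1 / (48 * sqrt (real n))) * sqrt (t / (1 - t)) + W $$ (i,j) \<ge> 0"
            using cond_c4 ij Y0 False by blast
          have "(1 - \<epsilon>) * lam * cAc + W $$ (i,j) \<ge> 0" using h unfolding lam_def K_def cAc_def by linarith
          hence "lam * C i j - P $$ (i,j) - W $$ (i,j) \<le> - (\<epsilon> * lam * cAc)"
            unfolding C_def using False Pz by (simp add: algebra_simps)
          thus ?thesis using elm Dp by (intro term_pos) auto
        qed
      next
        case Y1: False
        hence Y1': "Ystar $$ (i,j) = 1" using Y01 ij by auto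
        have Dn: "D i j \<le> 0" unfolding D_def using Y1' Y01' ij by simp
        show ?thesis
        proof (cases "A $$ (i,j) = 1")
          case True
          have h: "(1 - \<epsilon>) * (1 / (48 * sqrt (real n))) * sqrt ((1 - t) / t) - (U0 * U0\<^sup>T + W) $$ (i,j) \<ge> 0"
            using cond_c3 ij Y1 True by blast
          have "(1 - \<epsilon>) * lam * cA - (P $$ (i,j) + W $$ (i,j)) \<ge> 0"
            using h unfolding PWij lam_def K_def cA_def by linarith
          hence "\<epsilon> * lam * cA \<le> lam * C i j - P $$ (i,j) - W $$ (i,j)"
            unfolding C_def using True by (simp add: algebra_simps)
          thus ?thesis using elm Dn by (intro term_neg) auto
        next
          case False
          have h: "- (1 + \<epsilon>) * (1 / (48 * sqrt (real n))) * sqrt (t / (1 - t)) - (U0 * U0\<^sup>T + W) $$ (i,j) = 0"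
            using cond_c1 ij Y1 False by blast
          have "- (1 + \<epsilon>) * lam * cAc - (P $$ (i,j) + W $$ (i,j)) = 0"
            using h unfolding PWij lam_def K_def cAc_def by linarith
          hence "\<epsilon> * lam * cAc \<le> lam * C i j - P $$ (i,j) - W $$ (i,j)"
            unfolding C_def using False by (simp add: algebra_simps)
          thus ?thesis using elm Dn by (intro term_neg) auto
        qed
      qed
      have "lam * C i j * D i j - Z $$ (i,j) * D i j
          = (lam * C i j - P $$ (i,j) - W $$ (i,j)) * D i j + T $$ (i,j) * D i j"
        unfolding Zij by (simp add: algebra_simps)
      also have "\<dots> \<le> - e * \<bar>D i j\<bar> + (e / 2) * \<bar>D i j\<bar>" using t1 t2 by linarith
      also have "\<dots> = - (e / 2) * \<bar>D i j\<bar>" by simp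
      finally show ?thesis .
    qed
    have Ssum: "(\<Sum>i<n. \<Sum>j<n. lam * C i j * D i j - Z $$ (i,j) * D i j) < 0"
    proof -
      have "(\<Sum>i<n. \<Sum>j<n. lam * C i j * D i j - Z $$ (i,j) * D i j) \<le> (\<Sum>i<n. \<Sum>j<n. - (e / 2) * \<bar>D i j\<bar>)"
        using termb by (intro sum_mono) auto
      also have "\<dots> = - (e / 2) * (\<Sum>i<n. \<Sum>j<n. \<bar>D i j\<bar>)" by (simp add: sum_distrib_left)
      also have "\<dots> < 0"
      proof -
        have "\<bar>D i0 j0\<bar> \<le> (\<Sum>j<n. \<bar>D i0 j\<bar>)" using ij0 by (intro member_le_sum) auto
        also have "\<dots> \<le> (\<Sum>i<n. \<Sum>j<n. \<bar>D i j\<bar>)"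
          using ij0 by (intro member_le_sum[where f = "\<lambda>i. \<Sum>j<n. \<bar>D i j\<bar>"]) (auto intro: sum_nonneg)
        finally have "0 < (\<Sum>i<n. \<Sum>j<n. \<bar>D i j\<bar>)" using ij0 unfolding D_def by simp
        thus ?thesis using e0 by (simp add: mult_pos_pos)
      qed
      finally show ?thesis .
    qed
    have "(\<Sum>i<n. \<Sum>j<n. lam * C i j * D i j - Z $$ (i,j) * D i j)
        = lam * (L Y - L Ystar) - (ip n Z Y - ip n Z Ystar)"
      unfolding L_def ip_def D_def
      by (simp add: sum_subtractf[symmetric] sum_distrib_left algebra_simps)
    hence neg: "lam * (L Y - L Ystar) - (ip n Z Y - ip n Z Ystar) < 0" using Ssum by simp
    have "objective n A cA cAc Y - objective n A cA cAc Ystar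
        = (L Y - L Ystar) - K * (nuclear_norm Y - nuclear_norm Ystar)" unfolding obj by (simp add: algebra_simps)
    also have "\<dots> \<le> (L Y - L Ystar) - K * (ip n Z Y - ip n Z Ystar)"
      using nnY K0 unfolding nnYs ipZ by (simp add: mult_left_mono)
    also have "\<dots> = K * (lam * (L Y - L Ystar) - (ip n Z Y - ip n Z Ystar))"
      unfolding lam_def using K0 by (simp add: algebra_simps)
    also have "\<dots> < 0" using K0 neg by (simp add: mult_pos_neg)
    finally show "objective n A (sqrt ((1 - t) / t)) (sqrt (t / (1 - t))) Y
            < objective n A (sqrt ((1 - t) / t)) (sqrt (t / (1 - t))) Ystar"
      unfolding cA_def cAc_def by simp
  qed
qed

end
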